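(* For $1\le s\le 2^{n-1}$ let $\Lambda(s)$ be the largest value, over all subsets $A\subseteq\{0,1\}^n$ with $|A|=s$, of the maximal eigenvalue of the subgraph of the Hamming cube induced by $A$, and let $\Delta(s)=n-\Lambda(s)$. (i) Let $1\le s\le 2^{n-1}$ and $r = n H^{-1}\!\left(\frac{\log_2 s}{n}\right)$. Then $\Lambda(s) \ge 2\sqrt{r(n-r)} - O_{r\to\infty}\!\left(r^{-1/6}\sqrt{n}\right)$; that is, there are absolute constants $C, r_0>0$ such that $\Lambda(s)\ge 2\sqrt{r(n-r)} - C r^{-1/6}\sqrt n$ whenever $r\ge r_0$. (ii) Let $s = 2^{n-o(n)}$ (with $s\le 2^{n-1}$). Then $\Delta(s) \le \ln\!\left(\frac{2^n}{s}\right)\cdot\left(1+o(1)\right)$, where $o(1)$ tends to $0$ as $n\to\infty$ and $s/2^n\to 0$.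
   Context: The Hamming cube $\{0,1\}^n$ is the graph with edges between vectors at Hamming distance $1$. $H(x)=x\log_2\frac1x+(1-x)\log_2\frac1{1-x}$ is the binary entropy function ($H(0)=0$), which is a strictly increasing bijection $[0,1/2]\to[0,1]$; $H^{-1}$ denotes its inverse on $[0,1]$. *)

theory Defs
  imports "HOL-Analysis.Analysis"
begin

text \<open>Vertices of the Hamming cube {0,1}^n are identified with subsets of {0..<n}
  (indicator vectors); two vertices are adjacent iff their Hamming distance,
  i.e. the size of the symmetric difference, is 1.\<close>

definition cube :: "nat \<Rightarrow> nat set set" where
  "cube n = Pow {..<n}"

definition hadj :: "nat set \<Rightarrow> nat set \<Rightarrow> bool" where
  "hadj x y \<longleftrightarrow> card ((x - y) \<union> (y - x)) = 1"

definition induced_eigenvalue :: "nat set set \<Rightarrow> real \<Rightarrow> bool" where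
  "induced_eigenvalue A k \<longleftrightarrow>
     (\<exists>v :: nat set \<Rightarrow> real. (\<exists>x\<in>A. v x \<noteq> 0) \<and>
        (\<forall>x\<in>A. (\<Sum>y\<in>{y\<in>A. hadj x y}. v y) = k * v x))"

definition max_eigenvalue :: "nat set set \<Rightarrow> real" where
  "max_eigenvalue A = Max {k. induced_eigenvalue A k}"

definition Lambda :: "nat \<Rightarrow> nat \<Rightarrow> real" where
  "Lambda n s = Max {max_eigenvalue A | A. A \<subseteq> cube n \<and> card A = s}"

definition Delta :: "nat \<Rightarrow> nat \<Rightarrow> real" where
  "Delta n s = real n - Lambda n s"

definition bin_entropy :: "real \<Rightarrow> real" where
  "bin_entropy x = (if x = 0 \<or> x = 1 then 0
      else x * log 2 (1 / x) + (1 - x) * log 2 (1 / (1 - x)))"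

definition bin_entropy_inv :: "real \<Rightarrow> real" where
  "bin_entropy_inv y = (THE x. 0 \<le> x \<and> x \<le> 1/2 \<and> bin_entropy x = y)"

end

theory Submission
  imports Defs "Jordan_Normal_Form.Char_Poly"
begin

lemma hadj_sym: "hadj x y = hadj y x"
  unfolding hadj_def by (simp add: Un_commute)

definition Mop :: "nat set set \<Rightarrow> (nat set \<Rightarrow> real) \<Rightarrow> nat set \<Rightarrow> real" where
  "Mop A v x = (\<Sum>y\<in>{y\<in>A. hadj x y}. v y)"

definition Qf :: "nat set set \<Rightarrow> (nat set \<Rightarrow> real) \<Rightarrow> real" where
  "Qf A v = (\<Sum>x\<in>A. v x * Mop A v x)"

definition Nf :: "nat set set \<Rightarrow> (nat set \<Rightarrow> real) \<Rightarrow> real" where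
  "Nf A v = (\<Sum>x\<in>A. (v x)^2)"

lemma Mop_alt: "finite A \<Longrightarrow> Mop A v x = (\<Sum>y\<in>A. if hadj x y then v y else 0)"
  unfolding Mop_def by (simp add: sum.inter_filter)

lemma cross_sym:
  assumes "finite A"
  shows "(\<Sum>x\<in>A. u x * Mop A w x) = (\<Sum>x\<in>A. w x * Mop A u x)"
proof -
  have "(\<Sum>x\<in>A. u x * Mop A w x) = (\<Sum>x\<in>A. \<Sum>y\<in>A. if hadj x y then u x * w y else 0)"
    using assms by (simp add: Mop_alt sum_distrib_left if_distrib cong: if_cong)
  also have "\<dots> = (\<Sum>y\<in>A. \<Sum>x\<in>A. if hadj x y then u x * w y else 0)"
    by (rule sum.swap)
  also have "\<dots> = (\<Sum>y\<in>A. w y * Mop A u y)"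
    using assms by (simp add: Mop_alt sum_distrib_left if_distrib hadj_sym mult.commute cong: if_cong)
  finally show ?thesis .
qed

lemma Mop_lin: "finite A \<Longrightarrow> Mop A (\<lambda>x. u x + t * w x) x = Mop A u x + t * Mop A w x"
  unfolding Mop_def by (simp add: sum.distrib sum_distrib_left)

lemma Qf_expand:
  assumes "finite A"
  shows "Qf A (\<lambda>x. u x + t * w x) = Qf A u + 2 * t * (\<Sum>x\<in>A. w x * Mop A u x) + t^2 * Qf A w"
proof -
  have "Qf A (\<lambda>x. u x + t * w x) = (\<Sum>x\<in>A. u x * Mop A u x + t * (u x * Mop A w x)
      + t * (w x * Mop A u x) + t^2 * (w x * Mop A w x))"
    unfolding Qf_def using assms by (intro sum.cong) (auto simp: Mop_lin algebra_simps power2_eq_square)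
  also have "\<dots> = Qf A u + t * (\<Sum>x\<in>A. u x * Mop A w x) + t * (\<Sum>x\<in>A. w x * Mop A u x) + t^2 * Qf A w"
    unfolding Qf_def by (simp add: sum.distrib sum_distrib_left)
  finally show ?thesis using cross_sym[OF assms, of u w] by simp
qed

lemma Nf_expand:
  shows "Nf A (\<lambda>x. u x + t * w x) = Nf A u + 2 * t * (\<Sum>x\<in>A. u x * w x) + t^2 * Nf A w"
proof -
  have "Nf A (\<lambda>x. u x + t * w x) = (\<Sum>x\<in>A. (u x)^2 + 2 * t * (u x * w x) + t^2 * (w x)^2)"
    unfolding Nf_def by (intro sum.cong) (auto simp: algebra_simps power2_eq_square)
  thus ?thesis unfolding Nf_def by (simp add: sum.distrib sum_distrib_left)
qed

lemma Nf_zero: assumes "finite A" "Nf A v = 0" "x \<in> A" shows "v x = 0"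
proof -
  have "(v x)^2 = 0" using assms unfolding Nf_def
    by (subst (asm) sum_nonneg_eq_0_iff) auto
  thus ?thesis by simp
qed

lemma Nf_nonneg: "Nf A v \<ge> 0" unfolding Nf_def by (simp add: sum_nonneg)

lemma Qf_Nf_zero: assumes "finite A" "Nf A v = 0" shows "Qf A v = 0"
  unfolding Qf_def using Nf_zero[OF assms] by simp

lemma Qf_scale: "Qf A (\<lambda>x. c * v x) = c^2 * Qf A v"
proof -
  have "Qf A (\<lambda>x. c * v x) = (\<Sum>x\<in>A. c^2 * (v x * Mop A v x))"
    unfolding Qf_def Mop_def by (intro sum.cong) (auto simp: sum_distrib_left[symmetric] power2_eq_square)
  thus ?thesis unfolding Qf_def by (simp add: sum_distrib_left)
qed

lemma Nf_scale: "Nf A (\<lambda>x. c * v x) = c^2 * Nf A v"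
  unfolding Nf_def by (simp add: sum_distrib_left power_mult_distrib)

lemma quad_zero:
  fixes a b :: real
  assumes "\<And>t. a * t + b * t^2 \<le> 0"
  shows "a = 0"
proof (rule ccontr)
  assume "a \<noteq> 0"
  define c where "c = 2 * (\<bar>b\<bar> + 1)"
  define t where "t = a / c"
  have pos: "c > 0" unfolding c_def by simp
  have e1: "a * t = a^2 / c" unfolding t_def by (simp add: power2_eq_square)
  have e2: "b * t^2 = (a^2 / c) * (b / c)" unfolding t_def by (simp add: power2_eq_square)
  have "a * t + b * t^2 = a^2 / c * (1 + b / c)"
    unfolding e1 e2 by (simp only: distrib_left mult_1_right)
  moreover have "a^2 / c > 0" using \<open>a \<noteq> 0\<close> pos by simp
  moreover have "1 + b / c > 0"
  proof -
    have "\<bar>b / c\<bar> < 1" using pos by (simp add: abs_divide c_def)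
    thus ?thesis by linarith
  qed
  ultimately have "a * t + b * t^2 > 0" by (metis mult_pos_pos)
  with assms[of t] show False by simp
qed

lemma exists_big_eig:
  assumes fin: "finite A" and fpos: "Nf A f > 0"
  shows "\<exists>k. induced_eigenvalue A k \<and> Qf A f / Nf A f \<le> k"
proof -
  define X where "X = product_topology (\<lambda>_::nat set. euclideanreal) A"
  define K where "K = PiE A (\<lambda>_. {-1..1::real})"
  define S where "S = {v \<in> topspace X. Nf A v = 1}"
  have contN: "continuous_map X euclideanreal (Nf A)"
    unfolding Nf_def X_def using fin
    by (intro continuous_intros) auto
  have contQ: "continuous_map X euclideanreal (Qf A)"
    unfolding Qf_def Mop_def X_def using fin
    by (intro continuous_intros) auto
  have cK: "compactin X K" unfolding X_def K_def by (simp add: compactin_PiE)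
  have SK: "S \<subseteq> K"
  proof
    fix v assume "v \<in> S"
    hence v: "v \<in> PiE A (\<lambda>_. UNIV)" "Nf A v = 1" unfolding S_def X_def by auto
    have "\<forall>x\<in>A. v x \<in> {-1..1}"
    proof
      fix x assume "x \<in> A"
      have "(v x)^2 \<le> Nf A v" unfolding Nf_def
        by (rule member_le_sum) (use \<open>x \<in> A\<close> fin in auto)
      hence "(v x)^2 \<le> 1^2" using v by simp
      hence "\<bar>v x\<bar> \<le> \<bar>1\<bar>" by (simp only: abs_le_square_iff)
      thus "v x \<in> {-1..1}" by (auto simp: abs_le_iff)
    qed
    thus "v \<in> K" using v unfolding K_def by (auto simp: PiE_iff)
  qed
  have clS: "closedin X S" unfolding S_def
    using closedin_continuous_map_preimage[OF contN, of "{1}"] by simp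
  have cS: "compactin X S" by (rule closed_compactin[OF cK SK clS])
  have cQS: "compact (Qf A ` S)"
    using image_compactin[OF cS contQ] by simp
  define g where "g = restrict (\<lambda>x. f x / sqrt (Nf A f)) A"
  have Ng: "Nf A g = 1"
  proof -
    have "Nf A g = Nf A (\<lambda>x. (1 / sqrt (Nf A f)) * f x)"
      unfolding Nf_def g_def by (intro sum.cong) auto
    also have "\<dots> = (1 / sqrt (Nf A f))^2 * Nf A f" by (rule Nf_scale)
    also have "\<dots> = 1" using fpos by (simp add: power_divide)
    finally show ?thesis .
  qed
  have gS: "g \<in> S" unfolding S_def X_def using Ng by (auto simp: g_def)
  obtain u where uS: "u \<in> S" and umax: "\<And>v. v \<in> S \<Longrightarrow> Qf A v \<le> Qf A u"
    using compact_attains_sup[OF cQS] gS by blast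
  define lam where "lam = Qf A u"
  have Nu: "Nf A u = 1" using uS unfolding S_def by auto
  have bound: "Qf A v \<le> lam * Nf A v" for v
  proof (cases "Nf A v = 0")
    case True thus ?thesis using Qf_Nf_zero[OF fin] by simp
  next
    case False
    hence vpos: "Nf A v > 0" using Nf_nonneg[of A v] by simp
    define h where "h = restrict (\<lambda>x. (1 / sqrt (Nf A v)) * v x) A"
    have Nh: "Nf A h = Nf A (\<lambda>x. (1 / sqrt (Nf A v)) * v x)"
      unfolding Nf_def h_def by (intro sum.cong) auto
    have Qh: "Qf A h = Qf A (\<lambda>x. (1 / sqrt (Nf A v)) * v x)"
      unfolding Qf_def Mop_def h_def by (intro sum.cong) auto
    have "Nf A h = (1 / sqrt (Nf A v))^2 * Nf A v" unfolding Nh by (rule Nf_scale)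
    hence "Nf A h = 1" using vpos by (simp add: power_divide)
    hence "h \<in> S" unfolding S_def X_def by (auto simp: h_def)
    hence "Qf A h \<le> lam" using umax lam_def by simp
    moreover have "Qf A h = (1 / sqrt (Nf A v))^2 * Qf A v" unfolding Qh by (rule Qf_scale)
    ultimately have "Qf A v / Nf A v \<le> lam" using vpos by (simp add: power_divide)
    thus ?thesis using vpos by (simp add: divide_le_eq)
  qed
  define w where "w x = Mop A u x - lam * u x" for x
  have key2: "2 * ((\<Sum>x\<in>A. w x * Mop A u x) - lam * (\<Sum>x\<in>A. u x * w x)) = 0"
  proof (rule quad_zero)
    fix t :: real
    have "Qf A (\<lambda>x. u x + t * w x) \<le> lam * Nf A (\<lambda>x. u x + t * w x)" by (rule bound)
    hence "lam + 2 * t * (\<Sum>x\<in>A. w x * Mop A u x) + t^2 * Qf A w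
        \<le> lam * (1 + 2 * t * (\<Sum>x\<in>A. u x * w x) + t^2 * Nf A w)"
      by (simp add: Qf_expand[OF fin] Nf_expand Nu lam_def)
    thus "(2 * ((\<Sum>x\<in>A. w x * Mop A u x) - lam * (\<Sum>x\<in>A. u x * w x))) * t + (Qf A w - lam * Nf A w) * t^2 \<le> 0"
      by (simp add: algebra_simps)
  qed
  hence key: "(\<Sum>x\<in>A. w x * Mop A u x) - lam * (\<Sum>x\<in>A. u x * w x) = 0" by simp
  have "Nf A w = (\<Sum>x\<in>A. w x * Mop A u x) - lam * (\<Sum>x\<in>A. u x * w x)"
  proof -
    have "Nf A w = (\<Sum>x\<in>A. w x * Mop A u x - lam * (u x * w x))"
      unfolding Nf_def w_def by (intro sum.cong) (auto simp: power2_eq_square algebra_simps)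
    thus ?thesis by (simp add: sum_subtractf sum_distrib_left)
  qed
  hence Nw: "Nf A w = 0" using key by simp
  have eig: "induced_eigenvalue A lam"
    unfolding induced_eigenvalue_def
  proof (intro exI conjI)
    show "\<exists>x\<in>A. u x \<noteq> 0"
    proof (rule ccontr)
      assume "\<not> ?thesis" hence "Nf A u = 0" unfolding Nf_def by simp
      with Nu show False by simp
    qed
    show "\<forall>x\<in>A. (\<Sum>y\<in>{y\<in>A. hadj x y}. u y) = lam * u x"
      using Nf_zero[OF fin Nw] unfolding w_def Mop_def by simp
  qed
  have "Qf A f \<le> lam * Nf A f" by (rule bound)
  hence "Qf A f / Nf A f \<le> lam" using fpos by (simp add: divide_le_eq)
  with eig show ?thesis by blast
qed


lemma finite_eigs:
  assumes fin: "finite A"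
  shows "finite {k. induced_eigenvalue A k}"
proof -
  obtain xs where dxs: "distinct xs" and sxs: "set xs = A"
    using finite_distinct_list[OF fin] by blast
  define N where "N = length xs"
  define MM where "MM = Matrix.mat N N (\<lambda>(i,j). if hadj (xs!i) (xs!j) then (1::real) else 0)"
  have MMc: "MM \<in> carrier_mat N N" unfolding MM_def by simp
  have bij: "bij_betw ((!) xs) {..<N} A"
    by (rule bij_betw_nth) (use dxs sxs N_def in auto)
  have sub: "{k. induced_eigenvalue A k} \<subseteq> {k. poly (char_poly MM) k = 0}"
  proof
    fix k assume "k \<in> {k. induced_eigenvalue A k}"
    then obtain v where vnz: "\<exists>x\<in>A. v x \<noteq> 0"
      and ve: "\<forall>x\<in>A. (\<Sum>y\<in>{y\<in>A. hadj x y}. v y) = k * v x"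
      unfolding induced_eigenvalue_def by blast
    define w where "w = Matrix.vec N (\<lambda>i. v (xs!i))"
    have wc: "w \<in> carrier_vec N" unfolding w_def by simp
    have wnz: "w \<noteq> 0\<^sub>v N"
    proof
      assume w0: "w = 0\<^sub>v N"
      obtain x where "x \<in> A" "v x \<noteq> 0" using vnz by blast
      then obtain i where "i < N" "xs ! i = x" using sxs N_def by (auto simp: in_set_conv_nth)
      hence "Matrix.vec_index w i = v x" unfolding w_def by simp
      with w0 \<open>i < N\<close> \<open>v x \<noteq> 0\<close> show False by simp
    qed
    have "MM *\<^sub>v w = k \<cdot>\<^sub>v w"
    proof (rule eq_vecI)
      show "dim_vec (MM *\<^sub>v w) = dim_vec (k \<cdot>\<^sub>v w)" unfolding MM_def w_def by simp
      fix i assume "i < dim_vec (k \<cdot>\<^sub>v w)"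
      hence i: "i < N" unfolding w_def by simp
      have "Matrix.vec_index (MM *\<^sub>v w) i = (\<Sum>j\<in>{..<N}. (if hadj (xs!i) (xs!j) then 1 else 0) * v (xs!j))"
        using i unfolding MM_def w_def
        by (simp add: scalar_prod_def lessThan_atLeast0)
      also have "\<dots> = (\<Sum>y\<in>A. (if hadj (xs!i) y then 1 else 0) * v y)"
        using sum.reindex_bij_betw[OF bij, of "\<lambda>y. (if hadj (xs!i) y then 1 else 0) * v y"] by simp
      also have "\<dots> = (\<Sum>y\<in>A. if hadj (xs!i) y then v y else 0)"
        by (intro sum.cong) auto
      also have "\<dots> = (\<Sum>y\<in>{y\<in>A. hadj (xs!i) y}. v y)"
        using fin by (simp add: sum.inter_filter)
      also have "\<dots> = k * v (xs!i)"
        using ve i sxs N_def by auto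
      also have "\<dots> = Matrix.vec_index (k \<cdot>\<^sub>v w) i" using i unfolding w_def by simp
      finally show "Matrix.vec_index (MM *\<^sub>v w) i = Matrix.vec_index (k \<cdot>\<^sub>v w) i" .
    qed
    hence "eigenvalue MM k"
      unfolding eigenvalue_def eigenvector_def using wc wnz MMc by auto
    thus "k \<in> {k. poly (char_poly MM) k = 0}"
      using eigenvalue_root_char_poly[OF MMc] by simp
  qed
  have "char_poly MM \<noteq> 0" using degree_monic_char_poly[OF MMc] by auto
  hence "finite {k. poly (char_poly MM) k = 0}" by (rule poly_roots_finite)
  thus ?thesis using sub finite_subset by blast
qed

lemma max_eig_ge:
  assumes fin: "finite A" and fpos: "Nf A f > 0"
  shows "Qf A f / Nf A f \<le> max_eigenvalue A"
proof -
  obtain k where k: "induced_eigenvalue A k" "Qf A f / Nf A f \<le> k"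
    using exists_big_eig[OF fin fpos] by blast
  have "k \<le> max_eigenvalue A" unfolding max_eigenvalue_def
    using finite_eigs[OF fin] k(1) by (simp add: Max_ge)
  with k show ?thesis by simp
qed

lemma Lambda_ge:
  assumes "A \<subseteq> cube n" "card A = s"
  shows "max_eigenvalue A \<le> Lambda n s"
proof -
  have "{max_eigenvalue A | A. A \<subseteq> cube n \<and> card A = s} = max_eigenvalue ` {A. A \<subseteq> cube n \<and> card A = s}"
    by auto
  moreover have "finite {A. A \<subseteq> cube n \<and> card A = s}"
    by (rule finite_subset[of _ "Pow (cube n)"]) (auto simp: cube_def)
  ultimately show ?thesis unfolding Lambda_def using assms
    by (auto intro!: Max_ge)
qed

lemma Lambda_ge_rayleigh:
  assumes "A \<subseteq> cube n" "card A = s" "Nf A f > 0"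
  shows "Qf A f / Nf A f \<le> Lambda n s"
proof -
  have "finite A" using assms(1) finite_subset by (auto simp: cube_def)
  thus ?thesis using max_eig_ge[OF _ assms(3)] Lambda_ge[OF assms(1,2)] by linarith
qed

definition lev :: "nat \<Rightarrow> nat set \<Rightarrow> nat" where "lev m x = card (x \<inter> {..<m})"
definition flp :: "nat set \<Rightarrow> nat \<Rightarrow> nat set" where
  "flp x i = (if i \<in> x then x - {i} else insert i x)"

lemma mem_flp: "z \<in> flp x i \<longleftrightarrow> (z \<in> x \<longleftrightarrow> z \<noteq> i)"
  unfolding flp_def by auto

lemma hadj_flip: "hadj x y \<longleftrightarrow> (\<exists>i. y = flp x i)"
proof
  assume "hadj x y"
  then obtain i where i: "(x - y) \<union> (y - x) = {i}" unfolding hadj_def by (auto simp: card_1_singleton_iff)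
  have h: "z \<in> y \<longleftrightarrow> (z \<in> x \<longleftrightarrow> z \<noteq> i)" for z
  proof -
    have "z \<in> (x - y) \<union> (y - x) \<longleftrightarrow> z = i" using i by auto
    thus ?thesis by blast
  qed
  have "y = flp x i" by (simp add: set_eq_iff mem_flp h)
  thus "\<exists>i. y = flp x i" by blast
next
  assume "\<exists>i. y = flp x i"
  then obtain i where "y = flp x i" by blast
  hence "(x - y) \<union> (y - x) = {i}" by (auto simp: mem_flp)
  thus "hadj x y" unfolding hadj_def by simp
qed

lemma flp_inj: "flp x i = flp x j \<Longrightarrow> i = j"
  by (metis mem_flp)

lemma flp_cube: "x \<in> cube n \<Longrightarrow> flp x i \<in> cube n \<longleftrightarrow> i < n"
  unfolding cube_def flp_def by auto

lemma nbr_sum: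
  assumes "x \<in> cube n"
  shows "(\<Sum>y\<in>{y\<in>cube n. hadj x y}. h y) = (\<Sum>i<n. h (flp x i))"
proof -
  have "bij_betw (flp x) {..<n} {y\<in>cube n. hadj x y}"
    unfolding bij_betw_def
  proof
    show "inj_on (flp x) {..<n}" by (auto intro: inj_onI flp_inj)
    show "flp x ` {..<n} = {y \<in> cube n. hadj x y}"
      using flp_cube[OF assms] hadj_flip by auto
  qed
  thus ?thesis using sum.reindex_bij_betw by metis
qed

lemma lev_le: "lev m x \<le> m"
  unfolding lev_def by (metis card_lessThan card_mono finite_lessThan inf_le2)

lemma lev_flp_in: "i < m \<Longrightarrow> i \<in> x \<Longrightarrow> lev m (flp x i) = lev m x - 1"
proof -
  assume a: "i < m" "i \<in> x"
  have "flp x i \<inter> {..<m} = (x \<inter> {..<m}) - {i}" using a unfolding flp_def by auto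
  thus ?thesis unfolding lev_def using a by (simp add: card_Diff_singleton)
qed

lemma lev_flp_out: "i < m \<Longrightarrow> i \<notin> x \<Longrightarrow> lev m (flp x i) = lev m x + 1"
proof -
  assume a: "i < m" "i \<notin> x"
  have "flp x i \<inter> {..<m} = insert i (x \<inter> {..<m})" using a unfolding flp_def by auto
  thus ?thesis unfolding lev_def using a by simp
qed

lemma lev_flp_high: "m \<le> i \<Longrightarrow> lev m (flp x i) = lev m x"
proof -
  assume a: "m \<le> i"
  have "flp x i \<inter> {..<m} = x \<inter> {..<m}" using a unfolding flp_def by auto
  thus ?thesis unfolding lev_def by simp
qed

lemma nbr_level_sum:
  fixes g :: "nat \<Rightarrow> real"
  assumes "m \<le> n"
  shows "(\<Sum>i<n. g (lev m (flp x i))) =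
    real (lev m x) * g (lev m x - 1) + real (m - lev m x) * g (lev m x + 1) + real (n - m) * g (lev m x)"
proof -
  have split: "{..<n} = {..<m} \<union> {m..<n}" using assms by auto
  have "(\<Sum>i<n. g (lev m (flp x i))) = (\<Sum>i<m. g (lev m (flp x i))) + (\<Sum>i\<in>{m..<n}. g (lev m (flp x i)))"
    unfolding split by (rule sum.union_disjoint) auto
  also have "(\<Sum>i\<in>{m..<n}. g (lev m (flp x i))) = real (n - m) * g (lev m x)"
    by (simp add: lev_flp_high)
  also have "(\<Sum>i<m. g (lev m (flp x i))) = (\<Sum>i\<in>{..<m} \<inter> x. g (lev m (flp x i))) + (\<Sum>i\<in>{..<m} - x. g (lev m (flp x i)))"
    by (rule sum.Int_Diff) simp
  also have "(\<Sum>i\<in>{..<m} \<inter> x. g (lev m (flp x i))) = (\<Sum>i\<in>{..<m} \<inter> x. g (lev m x - 1))"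
    by (intro sum.cong) (auto simp: lev_flp_in)
  also have "\<dots> = real (lev m x) * g (lev m x - 1)"
    by (simp add: lev_def Int_commute)
  also have "(\<Sum>i\<in>{..<m} - x. g (lev m (flp x i))) = (\<Sum>i\<in>{..<m} - x. g (lev m x + 1))"
    by (intro sum.cong) (auto simp: lev_flp_out)
  also have "\<dots> = real (m - lev m x) * g (lev m x + 1)"
  proof -
    have "card ({..<m} - x) = m - lev m x"
      unfolding lev_def by (simp add: card_Diff_subset_Int Int_commute)
    thus ?thesis by simp
  qed
  finally show ?thesis by simp
qed

lemma card_level:
  assumes "m \<le> n"
  shows "card {x\<in>cube n. lev m x = k} = (m choose k) * 2^(n-m)"
proof -
  have "bij_betw (\<lambda>x. (x \<inter> {..<m}, x - {..<m})) {x\<in>cube n. lev m x = k}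
          ({B. B \<subseteq> {..<m} \<and> card B = k} \<times> Pow {m..<n})"
  proof (rule bij_betw_byWitness[where f' = "\<lambda>(B, C). B \<union> C"])
    show "\<forall>a\<in>{x \<in> cube n. lev m x = k}. (\<lambda>(B, C). B \<union> C) (a \<inter> {..<m}, a - {..<m}) = a" by auto
    show "\<forall>a'\<in>{B. B \<subseteq> {..<m} \<and> card B = k} \<times> Pow {m..<n}.
       (\<lambda>x. (x \<inter> {..<m}, x - {..<m})) ((\<lambda>(B, C). B \<union> C) a') = a'"
      by auto
    show "(\<lambda>x. (x \<inter> {..<m}, x - {..<m})) ` {x \<in> cube n. lev m x = k}
        \<subseteq> {B. B \<subseteq> {..<m} \<and> card B = k} \<times> Pow {m..<n}"
      unfolding cube_def lev_def by auto
    show "(\<lambda>(B, C). B \<union> C) ` ({B. B \<subseteq> {..<m} \<and> card B = k} \<times> Pow {m..<n})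
        \<subseteq> {x \<in> cube n. lev m x = k}"
    proof
      fix z assume "z \<in> (\<lambda>(B, C). B \<union> C) ` ({B. B \<subseteq> {..<m} \<and> card B = k} \<times> Pow {m..<n})"
      then obtain B C where z: "z = B \<union> C" "B \<subseteq> {..<m}" "card B = k" "C \<subseteq> {m..<n}" by auto
      have "z \<inter> {..<m} = B" using z by auto
      thus "z \<in> {x \<in> cube n. lev m x = k}" using z assms unfolding cube_def lev_def by auto
    qed
  qed
  hence "card {x\<in>cube n. lev m x = k} = card ({B. B \<subseteq> {..<m} \<and> card B = k} \<times> Pow {m..<n})"
    by (rule bij_betw_same_card)
  also have "\<dots> = (m choose k) * 2^(n-m)"
    by (simp add: card_cartesian_product n_subsets card_Pow)
  finally show ?thesis .
qed

lemma sum_level: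
  fixes F :: "nat \<Rightarrow> real"
  assumes "m \<le> n"
  shows "(\<Sum>x\<in>cube n. F (lev m x)) = (\<Sum>k\<le>m. real ((m choose k) * 2^(n-m)) * F k)"
proof -
  have fin: "finite (cube n)" unfolding cube_def by simp
  have "(\<Sum>x\<in>cube n. F (lev m x)) = (\<Sum>k\<le>m. \<Sum>x\<in>{x\<in>cube n. lev m x = k}. F (lev m x))"
    by (rule sum.group[symmetric]) (use fin lev_le in auto)
  also have "\<dots> = (\<Sum>k\<le>m. \<Sum>x\<in>{x\<in>cube n. lev m x = k}. F k)"
    by (intro sum.cong) auto
  also have "\<dots> = (\<Sum>k\<le>m. real ((m choose k) * 2^(n-m)) * F k)"
    using card_level[OF assms] by simp
  finally show ?thesis .
qed

definition cc :: "nat \<Rightarrow> nat \<Rightarrow> nat \<Rightarrow> real" where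
  "cc n m k = real ((m choose k) * 2^(n-m))"

lemma sum_shift0: "(\<Sum>k\<le>m. F k) = F 0 + (\<Sum>k<m. F (Suc k))"
  by (induct m) (auto simp: add.assoc)

lemma cc_rec: "k < m \<Longrightarrow> cc n m (Suc k) * real (Suc k) = cc n m k * real (m - k)"
proof -
  assume "k < m"
  have "(m choose Suc k) * Suc k = (m choose k) * (m - k)"
    by (metis binomial_absorb_comp binomial_absorption mult.commute)
  hence e: "real (m choose Suc k) * real (Suc k) = real (m choose k) * real (m - k)"
    by (metis of_nat_mult)
  have "cc n m (Suc k) * real (Suc k) = (real (m choose Suc k) * real (Suc k)) * 2^(n-m)"
    by (simp add: cc_def mult_ac)
  also have "\<dots> = (real (m choose k) * real (m - k)) * 2^(n-m)" by (simp only: e)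
  also have "\<dots> = cc n m k * real (m - k)" by (simp add: cc_def mult_ac)
  finally show ?thesis .
qed

lemma level_QN:
  fixes g :: "nat \<Rightarrow> real"
  assumes mn: "m \<le> n" and supp: "{x\<in>cube n. g (lev m x) \<noteq> 0} \<subseteq> A" and Ac: "A \<subseteq> cube n"
  shows "Nf A (\<lambda>x. g (lev m x)) = (\<Sum>k\<le>m. cc n m k * (g k)^2)"
    and "Qf A (\<lambda>x. g (lev m x)) = real (n - m) * (\<Sum>k\<le>m. cc n m k * (g k)^2)
           + 2 * (\<Sum>k<m. cc n m k * real (m - k) * g k * g (Suc k))"
proof -
  define f where "f x = g (lev m x)" for x
  have fin: "finite (cube n)" unfolding cube_def by simp
  have z: "x \<in> cube n \<Longrightarrow> x \<notin> A \<Longrightarrow> f x = 0" for x using supp unfolding f_def by auto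
  have "Nf A f = (\<Sum>x\<in>cube n. (f x)^2)"
    unfolding Nf_def by (rule sum.mono_neutral_left) (use fin Ac z in auto)
  also have "\<dots> = (\<Sum>k\<le>m. cc n m k * (g k)^2)"
    unfolding f_def cc_def by (rule sum_level[OF mn])
  finally show "Nf A (\<lambda>x. g (lev m x)) = (\<Sum>k\<le>m. cc n m k * (g k)^2)" unfolding f_def .
  have Mop_eq: "Mop A f x = Mop (cube n) f x" if "x \<in> cube n" for x
    unfolding Mop_def by (rule sum.mono_neutral_left) (use fin Ac z in auto)
  have "Qf A f = (\<Sum>x\<in>cube n. f x * Mop (cube n) f x)"
    unfolding Qf_def by (rule sum.mono_neutral_cong_left) (use fin Ac z Mop_eq in auto)
  also have "\<dots> = (\<Sum>x\<in>cube n. g (lev m x) * (real (lev m x) * g (lev m x - 1)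
      + real (m - lev m x) * g (lev m x + 1) + real (n - m) * g (lev m x)))"
    by (intro sum.cong refl) (simp add: Mop_def nbr_sum f_def nbr_level_sum[OF mn])
  also have "\<dots> = (\<Sum>k\<le>m. cc n m k * (g k * (real k * g (k - 1)
      + real (m - k) * g (k + 1) + real (n - m) * g k)))"
    unfolding cc_def by (rule sum_level[OF mn])
  also have "\<dots> = (\<Sum>k\<le>m. cc n m k * real k * g k * g (k - 1))
      + (\<Sum>k\<le>m. cc n m k * real (m - k) * g k * g (k + 1))
      + real (n - m) * (\<Sum>k\<le>m. cc n m k * (g k)^2)"
  proof -
    have "(\<Sum>k\<le>m. cc n m k * (g k * (real k * g (k - 1)
      + real (m - k) * g (k + 1) + real (n - m) * g k))) = (\<Sum>k\<le>m. cc n m k * real k * g k * g (k - 1)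
        + cc n m k * real (m - k) * g k * g (k + 1) + real (n - m) * (cc n m k * (g k)^2))"
      by (intro sum.cong refl) (simp only: distrib_left mult_ac power2_eq_square)
    thus ?thesis by (simp add: sum.distrib sum_distrib_left)
  qed
  also have "(\<Sum>k\<le>m. cc n m k * real k * g k * g (k - 1)) = (\<Sum>k<m. cc n m k * real (m - k) * g k * g (Suc k))"
  proof -
    have "(\<Sum>k\<le>m. cc n m k * real k * g k * g (k - 1)) = (\<Sum>k<m. cc n m (Suc k) * real (Suc k) * g (Suc k) * g k)"
      by (subst sum_shift0) simp
    also have "\<dots> = (\<Sum>k<m. cc n m k * real (m - k) * g k * g (Suc k))"
    proof (intro sum.cong refl)
      fix k assume "k \<in> {..<m}"
      hence "cc n m (Suc k) * real (Suc k) = cc n m k * real (m - k)" by (intro cc_rec) simp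
      thus "cc n m (Suc k) * real (Suc k) * g (Suc k) * g k = cc n m k * real (m - k) * g k * g (Suc k)"
        by (metis mult.commute mult.left_commute)
    qed
    finally show ?thesis .
  qed
  also have "(\<Sum>k\<le>m. cc n m k * real (m - k) * g k * g (k + 1)) = (\<Sum>k<m. cc n m k * real (m - k) * g k * g (Suc k))"
    by (simp add: lessThan_Suc_atMost[symmetric])
  finally show "Qf A (\<lambda>x. g (lev m x)) = real (n - m) * (\<Sum>k\<le>m. cc n m k * (g k)^2)
           + 2 * (\<Sum>k<m. cc n m k * real (m - k) * g k * g (Suc k))" unfolding f_def by simp
qed

definition sn :: "nat \<Rightarrow> nat \<Rightarrow> real" where "sn L j = sin (real j * pi / real (L+2))"

lemma sn_rec: "sn L j + sn L (j+2) = 2 * cos (pi / real (L+2)) * sn L (j+1)"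
proof -
  define t where "t = pi / real (L+2)"
  define a where "a = real (j+1) * t"
  have e1: "real j * pi / real (L+2) = a - t"
  proof -
    have "real j * pi / real (L+2) = real j * t" unfolding t_def by (simp only: times_divide_eq_right)
    also have "\<dots> = a - t" unfolding a_def by (simp add: algebra_simps)
    finally show ?thesis .
  qed
  have e2: "real (j+2) * pi / real (L+2) = a + t"
  proof -
    have "real (j+2) * pi / real (L+2) = real (j+2) * t" unfolding t_def by (simp only: times_divide_eq_right)
    also have "\<dots> = a + t" unfolding a_def by (simp add: algebra_simps)
    finally show ?thesis .
  qed
  have e3: "real (j+1) * pi / real (L+2) = a" unfolding a_def t_def by (simp only: times_divide_eq_right)
  show ?thesis unfolding sn_def e1 e2 e3 t_def[symmetric] by (simp add: sin_add sin_diff)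
qed

lemma sn_0: "sn L 0 = 0" unfolding sn_def by simp
lemma sn_end: "sn L (L+2) = 0" unfolding sn_def by simp
lemma sn_nonneg: assumes "j \<le> L+2" shows "sn L j \<ge> 0"
  unfolding sn_def
proof (rule sin_ge_zero)
  show "0 \<le> real j * pi / real (L + 2)" by simp
  have "real j * pi \<le> real (L+2) * pi" using assms by (intro mult_right_mono) auto
  thus "real j * pi / real (L + 2) \<le> pi" by (simp add: divide_le_eq)
qed

lemma sn_1_pos: "sn L 1 > 0"
  unfolding sn_def
proof (rule sin_gt_zero)
  show "0 < real 1 * pi / real (L + 2)" by simp
  have "1 * pi < real (L+2) * pi" by (intro mult_strict_right_mono) auto
  thus "real 1 * pi / real (L + 2) < pi" by (simp add: divide_less_eq)
qed

lemma trig_sum: "(\<Sum>j<L. sn L (j+1) * sn L (j+2)) = cos (pi / real (L+2)) * (\<Sum>j\<le>L. (sn L (j+1))^2)"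
proof -
  have h: "(\<Sum>j\<le>L. sn L (j+1) * (sn L j + sn L (j+2))) = 2 * cos (pi / real (L+2)) * (\<Sum>j\<le>L. (sn L (j+1))^2)"
  proof -
    have "(\<Sum>j\<le>L. sn L (j+1) * (sn L j + sn L (j+2))) = (\<Sum>j\<le>L. 2 * cos (pi / real (L+2)) * (sn L (j+1))^2)"
      by (intro sum.cong refl) (simp only: sn_rec power2_eq_square mult_ac)
    thus ?thesis by (simp add: sum_distrib_left)
  qed
  have a: "(\<Sum>j\<le>L. sn L (j+1) * sn L j) = (\<Sum>j<L. sn L (j+1) * sn L (j+2))"
    by (subst sum_shift0) (simp add: sn_0 mult.commute numeral_2_eq_2)
  have b: "(\<Sum>j\<le>L. sn L (j+1) * sn L (j+2)) = (\<Sum>j<L. sn L (j+1) * sn L (j+2))"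
    by (simp add: lessThan_Suc_atMost[symmetric] sn_end[simplified])
  have "(\<Sum>j\<le>L. sn L (j+1) * (sn L j + sn L (j+2))) = 2 * (\<Sum>j<L. sn L (j+1) * sn L (j+2))"
    using a b by (simp add: distrib_left sum.distrib)
  with h show ?thesis by simp
qed

lemma cc_pos: "k \<le> m \<Longrightarrow> cc n m k > 0"
  unfolding cc_def by simp

lemma sqrt_ratio:
  fixes a b p q :: real
  assumes "a > 0" "b > 0" "p \<ge> 0" "q \<ge> 0" "b * q = a * p"
  shows "a * p / (sqrt a * sqrt b) = sqrt (p * q)"
proof -
  have "p * q = a * p^2 / b" using assms by (simp add: field_simps power2_eq_square)
  hence "sqrt (p * q) = sqrt a * p / sqrt b"
    using assms by (simp add: real_sqrt_mult real_sqrt_divide)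
  also have "\<dots> = a * p / (sqrt a * sqrt b)"
  proof -
    have "sqrt a * sqrt a = a" using assms by simp
    thus ?thesis using assms by (simp add: field_simps)
  qed
  finally show ?thesis by simp
qed

lemma window_bound:
  assumes mn: "m \<le> n" and BL: "B + L \<le> m"
    and supp: "{x\<in>cube n. lev m x \<le> B + L} \<subseteq> A" and Ac: "A \<subseteq> cube n"
  defines "g \<equiv> (\<lambda>k. if B \<le> k \<and> k \<le> B + L then sn L (k + 1 - B) / sqrt (cc n m k) else 0)"
  shows "Nf A (\<lambda>x. g (lev m x)) > 0"
    and "real (n - m) + 2 * cos (pi / real (L+2)) * sqrt (real (m - (B + L)) * real (B + 1))
          \<le> Qf A (\<lambda>x. g (lev m x)) / Nf A (\<lambda>x. g (lev m x))"
proof -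
  define \<sigma> where "\<sigma> k = (if B \<le> k \<and> k \<le> B + L then sn L (k + 1 - B) else 0)" for k
  define SS where "SS = (\<Sum>j\<le>L. (sn L (j+1))^2)"
  define W where "W = sqrt (real (m - (B + L)) * real (B + 1))"
  define th where "th = pi / real (L+2)"
  have gs: "g k = \<sigma> k / sqrt (cc n m k)" for k unfolding g_def \<sigma>_def by simp
  have sig_nonneg: "\<sigma> k \<ge> 0" for k unfolding \<sigma>_def by (auto intro: sn_nonneg)
  have supp': "{x\<in>cube n. g (lev m x) \<noteq> 0} \<subseteq> A" using supp unfolding g_def by auto
  note QN = level_QN[OF mn supp' Ac]
  have SSpos: "SS > 0"
  proof -
    have "SS = (sn L 1)^2 + (\<Sum>j<L. (sn L (Suc j + 1))^2)" unfolding SS_def by (subst sum_shift0) simp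
    moreover have "(\<Sum>j<L. (sn L (Suc j + 1))^2) \<ge> 0" by (simp add: sum_nonneg)
    moreover have "(sn L 1)^2 > 0" using sn_1_pos[of L] by simp
    ultimately show ?thesis by linarith
  qed
  have N_eq: "Nf A (\<lambda>x. g (lev m x)) = SS"
  proof -
    have "(\<Sum>k\<le>m. cc n m k * (g k)^2) = (\<Sum>k\<le>m. (\<sigma> k)^2)"
    proof (intro sum.cong refl)
      fix k assume "k \<in> {..m}"
      hence "cc n m k > 0" by (simp add: cc_pos)
      thus "cc n m k * (g k)^2 = (\<sigma> k)^2" unfolding gs by (simp add: power_divide)
    qed
    also have "\<dots> = (\<Sum>k\<in>{B..B+L}. (\<sigma> k)^2)"
      by (rule sum.mono_neutral_right) (use BL in \<open>auto simp: \<sigma>_def\<close>)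
    also have "\<dots> = (\<Sum>j\<in>{0..L}. (\<sigma> (j + B))^2)"
      using sum.shift_bounds_cl_nat_ivl[of "\<lambda>k. (\<sigma> k)^2" 0 B L] by (simp add: add.commute)
    also have "\<dots> = SS" unfolding SS_def \<sigma>_def by (intro sum.cong) auto
    finally show ?thesis using QN(1) by simp
  qed
  thus "Nf A (\<lambda>x. g (lev m x)) > 0" using SSpos by simp
  have pt: "cc n m k * real (m - k) * g k * g (Suc k) \<ge> W * (\<sigma> k * \<sigma> (Suc k))" if k: "k < m" for k
  proof (cases "B \<le> k \<and> Suc k \<le> B + L")
    case True
    have a: "cc n m k > 0" "cc n m (Suc k) > 0" using k by (auto intro: cc_pos)
    have r: "cc n m (Suc k) * real (Suc k) = cc n m k * real (m - k)" using k by (rule cc_rec)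
    have "cc n m k * real (m - k) * g k * g (Suc k)
        = (\<sigma> k * \<sigma> (Suc k)) * (cc n m k * real (m - k) / (sqrt (cc n m k) * sqrt (cc n m (Suc k))))"
      unfolding gs by (simp add: field_simps)
    also have "cc n m k * real (m - k) / (sqrt (cc n m k) * sqrt (cc n m (Suc k))) = sqrt (real (m - k) * real (Suc k))"
      by (rule sqrt_ratio) (use a r in auto)
    finally have e: "cc n m k * real (m - k) * g k * g (Suc k) = (\<sigma> k * \<sigma> (Suc k)) * sqrt (real (m - k) * real (Suc k))" .
    have "W \<le> sqrt (real (m - k) * real (Suc k))"
      unfolding W_def using True k by (intro real_sqrt_le_mono mult_mono) auto
    moreover have "\<sigma> k * \<sigma> (Suc k) \<ge> 0" using sig_nonneg by simp
    ultimately have "(\<sigma> k * \<sigma> (Suc k)) * W \<le> (\<sigma> k * \<sigma> (Suc k)) * sqrt (real (m - k) * real (Suc k))"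
      by (intro mult_left_mono)
    thus ?thesis using e by (metis mult.commute)
  next
    case False
    hence z1: "\<sigma> k * \<sigma> (Suc k) = 0" unfolding \<sigma>_def by auto
    have z2: "g k * g (Suc k) = 0" using False unfolding g_def by auto
    have "cc n m k * real (m - k) * g k * g (Suc k) = (cc n m k * real (m - k)) * (g k * g (Suc k))"
      by (simp only: mult.assoc)
    thus ?thesis by (simp only: z1 z2 mult_zero_right mult_zero_left order_refl)
  qed
  have sig_sum: "(\<Sum>k<m. \<sigma> k * \<sigma> (Suc k)) = (\<Sum>j<L. sn L (j+1) * sn L (j+2))"
  proof -
    have "(\<Sum>k<m. \<sigma> k * \<sigma> (Suc k)) = (\<Sum>k\<in>{B..<B+L}. \<sigma> k * \<sigma> (Suc k))"
      by (rule sum.mono_neutral_right) (use BL in \<open>auto simp: \<sigma>_def\<close>)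
    also have "\<dots> = (\<Sum>j\<in>{0..<L}. \<sigma> (j + B) * \<sigma> (Suc (j + B)))"
      using sum.shift_bounds_nat_ivl[of "\<lambda>k. \<sigma> k * \<sigma> (Suc k)" 0 B L] by (simp add: add.commute)
    also have "\<dots> = (\<Sum>j<L. sn L (j+1) * sn L (j+2))"
      unfolding \<sigma>_def atLeast0LessThan by (intro sum.cong) (auto simp: numeral_2_eq_2)
    finally show ?thesis .
  qed
  have T: "(\<Sum>k<m. cc n m k * real (m - k) * g k * g (Suc k)) \<ge> W * cos th * SS"
  proof -
    have "(\<Sum>k<m. cc n m k * real (m - k) * g k * g (Suc k)) \<ge> (\<Sum>k<m. W * (\<sigma> k * \<sigma> (Suc k)))"
      by (intro sum_mono pt) simp
    also have "(\<Sum>k<m. W * (\<sigma> k * \<sigma> (Suc k))) = W * cos th * SS"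
      unfolding sum_distrib_left[symmetric] sig_sum trig_sum th_def SS_def by simp
    finally show ?thesis .
  qed
  have "Qf A (\<lambda>x. g (lev m x)) \<ge> real (n - m) * SS + 2 * (W * cos th * SS)"
    using QN(2) N_eq QN(1) T by simp
  hence "Qf A (\<lambda>x. g (lev m x)) / SS \<ge> real (n - m) + 2 * cos th * W"
    using SSpos by (simp add: field_simps)
  thus "real (n - m) + 2 * cos (pi / real (L+2)) * sqrt (real (m - (B + L)) * real (B + 1))
          \<le> Qf A (\<lambda>x. g (lev m x)) / Nf A (\<lambda>x. g (lev m x))"
    using N_eq unfolding th_def W_def by simp
qed

lemma LB:
  assumes mn: "m \<le> n" and BL: "B + L \<le> m"
    and supp: "{x\<in>cube n. lev m x \<le> B + L} \<subseteq> A" and Ac: "A \<subseteq> cube n" and cA: "card A = s"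
  shows "real (n - m) + 2 * cos (pi / real (L+2)) * sqrt (real (m - (B + L)) * real (B + 1)) \<le> Lambda n s"
proof -
  define g where "g \<equiv> (\<lambda>k. if B \<le> k \<and> k \<le> B + L then sn L (k + 1 - B) / sqrt (cc n m k) else 0)"
  note w = window_bound[OF mn BL supp Ac, folded g_def]
  show ?thesis using Lambda_ge_rayleigh[OF Ac cA w(1)] w(2) by linarith
qed

definition Hl :: "real \<Rightarrow> real" where "Hl x = - (x * ln x) - (1 - x) * ln (1 - x)"

lemma bin_entropy_Hl: assumes "0 \<le> x" "x \<le> 1" shows "bin_entropy x = Hl x / ln 2"
proof (cases "x = 0 \<or> x = 1")
  case True thus ?thesis unfolding bin_entropy_def Hl_def by auto
next
  case False
  hence x: "0 < x" "x < 1" using assms by auto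
  show ?thesis using False x unfolding bin_entropy_def Hl_def log_def
    by (simp add: ln_div field_simps)
qed

lemma Hl_0: "Hl 0 = 0" unfolding Hl_def by simp
lemma Hl_half: "Hl (1/2) = ln 2"
  unfolding Hl_def by (simp add: ln_div)

lemma Hl_deriv: assumes "0 < x" "x < 1" shows "DERIV Hl x :> ln (1 - x) - ln x"
proof -
  have "DERIV (\<lambda>x. - (x * ln x) - (1 - x) * ln (1 - x)) x :> - (1 * ln x + x * (1 / x)) - ((-1) * ln (1 - x) + (1 - x) * ((-1) / (1 - x)))"
    using assms by (auto intro!: derivative_eq_intros)
  moreover have "- (1 * ln x + x * (1 / x)) - ((-1) * ln (1 - x) + (1 - x) * ((-1) / (1 - x))) = ln (1 - x) - ln x"
    using assms by (simp add: field_simps)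
  ultimately show ?thesis unfolding Hl_def[abs_def] by simp
qed

lemma Hl_cont: assumes "0 < a" "b < 1" shows "continuous_on {a..b} Hl"
  unfolding Hl_def[abs_def] using assms by (intro continuous_intros) auto

lemma Hl_pos: assumes "0 < b" "b \<le> 1/2" shows "Hl b > 0"
proof -
  have "ln b < 0" using assms by simp
  hence "- (b * ln b) > 0" using assms by (simp add: mult_pos_neg)
  moreover have "ln (1 - b) \<le> 0" using assms by simp
  hence "(1 - b) * ln (1 - b) \<le> 0" using assms by (simp add: mult_nonneg_nonpos)
  ultimately show ?thesis unfolding Hl_def by linarith
qed

lemma Hl_strict_mono: assumes "0 \<le> a" "a < b" "b \<le> 1/2" shows "Hl a < Hl b"
proof (cases "a = 0")
  case True thus ?thesis using Hl_pos[of b] assms Hl_0 by simp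
next
  case False
  hence a: "0 < a" using assms by simp
  show ?thesis
  proof (rule DERIV_pos_imp_increasing_open[OF assms(2)])
    fix x assume x: "a < x" "x < b"
    have "ln x < ln (1 - x)" using x a assms by simp
    thus "\<exists>y. DERIV Hl x :> y \<and> y > 0" using Hl_deriv[of x] x a assms by auto
  next
    show "continuous_on {a..b} Hl" using a assms by (intro Hl_cont) auto
  qed
qed

lemma Hl_mono: assumes "0 \<le> a" "a \<le> b" "b \<le> 1/2" shows "Hl a \<le> Hl b"
  using Hl_strict_mono[of a b] assms by (cases "a = b") auto

lemma Hl_small: assumes "0 < x" "x \<le> 1/2" shows "Hl x \<le> 3 * sqrt x"
proof -
  have sx: "sqrt x > 0" using assms by simp
  have "ln (1 / sqrt x) \<le> 1 / sqrt x - 1" using sx by (intro ln_le_minus_one) simp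
  moreover have "ln (1 / x) = 2 * ln (1 / sqrt x)"
  proof -
    have "1 / x = (1 / sqrt x)^2" using assms by (simp add: power_divide)
    thus ?thesis using sx by (simp add: ln_realpow)
  qed
  ultimately have "ln (1 / x) \<le> 2 / sqrt x" by simp
  hence "x * ln (1 / x) \<le> x * (2 / sqrt x)" using assms by (intro mult_left_mono) auto
  also have "x * (2 / sqrt x) = 2 * sqrt x"
    using sx assms by (simp add: field_simps)
  finally have t1: "- (x * ln x) \<le> 2 * sqrt x" using assms by (simp add: ln_div)
  have "ln (1 / (1 - x)) \<le> 1 / (1 - x) - 1" using assms by (intro ln_le_minus_one) simp
  hence "(1 - x) * ln (1 / (1 - x)) \<le> (1 - x) * (1 / (1 - x) - 1)" using assms by (intro mult_left_mono) auto
  also have "\<dots> = x" using assms by (simp add: field_simps)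
  finally have t2: "- ((1 - x) * ln (1 - x)) \<le> x" using assms by (simp add: ln_div)
  have "x \<le> sqrt x"
  proof -
    have "x * x \<le> x * 1" using assms by (intro mult_left_mono) auto
    hence "x^2 \<le> x" by (simp add: power2_eq_square)
    thus ?thesis using real_le_rsqrt by blast
  qed
  thus ?thesis using t1 t2 unfolding Hl_def by linarith
qed

lemma entropy_inv:
  assumes "0 \<le> y" "y \<le> 1"
  shows "0 \<le> bin_entropy_inv y \<and> bin_entropy_inv y \<le> 1/2 \<and> bin_entropy (bin_entropy_inv y) = y"
proof -
  have ex: "\<exists>x. 0 \<le> x \<and> x \<le> 1/2 \<and> bin_entropy x = y"
  proof (cases "y = 0")
    case True thus ?thesis by (intro exI[of _ 0]) (simp add: bin_entropy_def)
  next
    case False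
    hence ypos: "y > 0" using assms by simp
    define d where "d = min (1/4) ((y * ln 2 / 3)^2)"
    have dpos: "d > 0" unfolding d_def using ypos by simp
    have dle: "d \<le> 1/4" unfolding d_def by simp
    have "Hl d \<le> 3 * sqrt d" using dpos dle by (intro Hl_small) auto
    also have "sqrt d \<le> sqrt ((y * ln 2 / 3)^2)" unfolding d_def by (intro real_sqrt_le_mono) simp
    also have "sqrt ((y * ln 2 / 3)^2) = y * ln 2 / 3" using ypos by simp
    finally have "Hl d \<le> y * ln 2" by simp
    hence hd: "Hl d / ln 2 \<le> y" by (simp add: divide_le_eq)
    have hh: "y \<le> Hl (1/2) / ln 2" using assms by (simp add: Hl_half)
    have c: "continuous_on {d..1/2} (\<lambda>x. Hl x / ln 2)"
      using Hl_cont[of d "1/2"] dpos by (intro continuous_on_divide continuous_on_const) auto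
    obtain x where x: "d \<le> x" "x \<le> 1/2" "Hl x / ln 2 = y"
      using IVT'[of "\<lambda>x. Hl x / ln 2" d y "1/2", OF hd hh _ c] dle by auto
    thus ?thesis using dpos bin_entropy_Hl[of x] by (intro exI[of _ x]) auto
  qed
  have uniq: "x1 = x2" if "0 \<le> x1" "x1 \<le> 1/2" "bin_entropy x1 = y" "0 \<le> x2" "x2 \<le> 1/2" "bin_entropy x2 = y" for x1 x2
  proof (rule ccontr)
    assume "x1 \<noteq> x2"
    hence "x1 < x2 \<or> x2 < x1" by auto
    hence "Hl x1 \<noteq> Hl x2" using Hl_strict_mono that by (metis less_irrefl)
    moreover have "Hl x1 / ln 2 = Hl x2 / ln 2" using that bin_entropy_Hl[of x1] bin_entropy_Hl[of x2] by simp
    hence "Hl x1 = Hl x2" by simp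
    ultimately show False by simp
  qed
  have "0 \<le> bin_entropy_inv y \<and> bin_entropy_inv y \<le> 1/2 \<and> bin_entropy (bin_entropy_inv y) = y"
    unfolding bin_entropy_inv_def by (rule theI') (use ex uniq in blast)
  thus ?thesis .
qed

lemma chi_nonneg: fixes t :: real assumes "0 \<le> t" "t < 1" shows "2 * t \<le> ln (1 + t) - ln (1 - t)"
proof -
  define f where "f u = ln (1 + u) - ln (1 - u) - 2 * u" for u :: real
  have "f 0 \<le> f t"
  proof (rule DERIV_nonneg_imp_nondecreasing[OF assms(1)])
    fix u :: real assume u: "0 \<le> u" "u \<le> t"
    have d: "DERIV f u :> 1 / (1 + u) - (-1) / (1 - u) - 2"
      unfolding f_def[abs_def] using u assms by (auto intro!: derivative_eq_intros)
    have "u * u \<le> 1 * u" using u assms by (intro mult_right_mono) auto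
    hence uu: "1 - u * u > 0" using u assms by linarith
    have "1 / (1 + u) - (-1) / (1 - u) - 2 = 2 * u^2 / ((1 + u) * (1 - u))"
      using u assms uu by (simp add: field_simps power2_eq_square)
    also have "\<dots> \<ge> 0" using u assms by (intro divide_nonneg_pos) auto
    finally show "\<exists>y. DERIV f u :> y \<and> y \<ge> 0" using d by blast
  qed
  thus ?thesis unfolding f_def by simp
qed

lemma phi_bound: fixes x :: real assumes "0 \<le> x" "x < 1" shows "x^2 \<le> (1 - x) * ln (1 - x) + (1 + x) * ln (1 + x)"
proof -
  define f where "f u = (1 - u) * ln (1 - u) + (1 + u) * ln (1 + u) - u^2" for u :: real
  have "f 0 \<le> f x"
  proof (rule DERIV_nonneg_imp_nondecreasing[OF assms(1)])
    fix u :: real assume u: "0 \<le> u" "u \<le> x"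
    have d: "DERIV f u :> ((-1) * ln (1 - u) + (1 - u) * ((-1) / (1 - u))) + (1 * ln (1 + u) + (1 + u) * (1 / (1 + u))) - 2 * u"
      unfolding f_def[abs_def] using u assms by (auto intro!: derivative_eq_intros simp: power2_eq_square)
    have "((-1) * ln (1 - u) + (1 - u) * ((-1) / (1 - u))) + (1 * ln (1 + u) + (1 + u) * (1 / (1 + u))) - 2 * u
        = ln (1 + u) - ln (1 - u) - 2 * u"
      using u assms by (simp add: field_simps)
    also have "\<dots> \<ge> 0" using chi_nonneg[of u] u assms by simp
    finally show "\<exists>y. DERIV f u :> y \<and> y \<ge> 0" using d by blast
  qed
  thus ?thesis unfolding f_def by simp
qed

lemma pinsker: assumes "0 \<le> d" "d < 1/2" shows "2 * d^2 \<le> ln 2 - Hl (1/2 - d)"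
proof -
  define x where "x = 2 * d"
  have x: "0 \<le> x" "x < 1" using assms unfolding x_def by auto
  have e1: "1/2 - d = (1 - x) / 2" and e2: "1 - (1 - x) / 2 = (1 + x) / 2" unfolding x_def by (auto simp: field_simps)
  have l1: "ln ((1 - x) / 2) = ln (1 - x) - ln 2" using x by (subst ln_div) auto
  have l2: "ln ((1 + x) / 2) = ln (1 + x) - ln 2" using x by (subst ln_div) auto
  have "Hl (1/2 - d) = ln 2 - ((1 - x) * ln (1 - x) + (1 + x) * ln (1 + x)) / 2"
    unfolding Hl_def e1 e2 l1 l2 by (simp add: field_simps)
  moreover have "2 * d^2 = x^2 / 2" unfolding x_def by (simp add: power2_eq_square)
  ultimately show ?thesis using phi_bound[OF x] by simp
qed

lemma binom_ball:
  assumes m: "0 < m" and R: "2 * R \<le> m"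
  shows "(\<Sum>k\<le>R. real (m choose k)) \<le> exp (real m * Hl (real R / real m))"
proof (cases "R = 0")
  case True thus ?thesis by (simp add: Hl_0)
next
  case False
  define p where "p = real R / real m"
  have p: "0 < p" "p \<le> 1/2" unfolding p_def using m R False by (auto simp: field_simps)
  have pq: "p \<le> 1 - p" using p by simp
  have Rm: "R \<le> m" using R by simp
  have "(\<Sum>k\<le>R. real (m choose k) * (p^R * (1 - p)^(m - R))) \<le> (\<Sum>k\<le>R. real (m choose k) * (p^k * (1 - p)^(m - k)))"
  proof (intro sum_mono mult_left_mono)
    fix k assume "k \<in> {..R}"
    hence k: "k \<le> R" by simp
    have "p^R * (1 - p)^(m - R) = p^k * (p^(R - k) * (1 - p)^(m - R))"
      using k by (simp add: power_add[symmetric])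
    also have "\<dots> \<le> p^k * ((1 - p)^(R - k) * (1 - p)^(m - R))"
      using p pq by (intro mult_left_mono mult_right_mono power_mono) auto
    also have "(1 - p)^(R - k) * (1 - p)^(m - R) = (1 - p)^(m - k)"
      using k Rm by (simp add: power_add[symmetric])
    finally show "p^R * (1 - p)^(m - R) \<le> p^k * (1 - p)^(m - k)" .
  qed simp
  also have "\<dots> \<le> (\<Sum>k\<le>m. real (m choose k) * (p^k * (1 - p)^(m - k)))"
    by (rule sum_mono2) (use Rm p in auto)
  also have "\<dots> = (\<Sum>k\<le>m. real (m choose k) * p^k * (1 - p)^(m - k))" by (simp add: mult.assoc)
  also have "\<dots> = (p + (1 - p))^m" by (rule binomial_ring[symmetric])
  also have "\<dots> = 1" by simp
  finally have "(\<Sum>k\<le>R. real (m choose k)) * (p^R * (1 - p)^(m - R)) \<le> 1"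
    by (simp add: sum_distrib_right)
  moreover have pos: "p^R * (1 - p)^(m - R) > 0" using p by simp
  ultimately have "(\<Sum>k\<le>R. real (m choose k)) \<le> 1 / (p^R * (1 - p)^(m - R))"
    by (simp add: le_divide_eq)
  also have "1 / (p^R * (1 - p)^(m - R)) = exp (real m * Hl p)"
  proof -
    have "ln (p^R * (1 - p)^(m - R)) = real R * ln p + real (m - R) * ln (1 - p)"
      using p by (simp add: ln_mult ln_realpow)
    also have "\<dots> = - (real m * Hl p)"
    proof -
      have "real R = real m * p" unfolding p_def using m by simp
      moreover have "real (m - R) = real m * (1 - p)" unfolding p_def using m Rm by (simp add: field_simps)
      ultimately show ?thesis unfolding Hl_def by (simp add: algebra_simps)
    qed
    finally have eq: "p^R * (1 - p)^(m - R) = exp (- (real m * Hl p))"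
      using pos by (metis exp_ln)
    have "1 / (p^R * (1 - p)^(m - R)) = 1 / exp (- (real m * Hl p))" by (simp only: eq)
    also have "\<dots> = exp (real m * Hl p)" by (simp add: exp_minus divide_inverse)
    finally show ?thesis .
  qed
  finally show ?thesis unfolding p_def .
qed

lemma cos_lb: "1 - x^2 / 2 \<le> cos (x::real)"
proof -
  have "cos x = cos (2 * (x/2))" by simp
  also have "\<dots> = 1 - 2 * (sin (x/2))^2" by (rule cos_double_sin)
  finally have c: "cos x = 1 - 2 * (sin (x/2))^2" .
  have "\<bar>sin (x/2)\<bar> \<le> \<bar>x/2\<bar>" by (rule abs_sin_x_le_abs_x)
  hence "(sin (x/2))^2 \<le> (x/2)^2" by (metis abs_le_square_iff)
  thus ?thesis unfolding c by (simp add: power_divide)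
qed

lemma win_est:
  fixes R m :: nat
  assumes R27: "27 \<le> R" and Rm: "2 * R \<le> m"
  defines "L \<equiv> nat \<lfloor>real R powr (1/3)\<rfloor>"
  shows "L \<le> R"
    and "2 * sqrt (real R * real (m - R)) - 18 * real R powr (-1/6) * sqrt (real m)
         \<le> 2 * cos (pi / real (L+2)) * sqrt (real (m - R) * real (R - L + 1))"
proof -
  define u where "u = real R powr (1/3)"
  have Rpos: "real R > 0" using R27 by simp
  have upos: "u > 0" unfolding u_def using Rpos by simp
  have u3: "u ^ 3 = real R"
  proof -
    have "u ^ 3 = u powr (real 3)" using upos by (simp add: powr_realpow)
    also have "\<dots> = real R powr ((1/3) * 3)" unfolding u_def by (simp add: powr_powr)
    finally show ?thesis using Rpos by simp
  qed
  have u_ge3: "u \<ge> 3"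
  proof (rule ccontr)
    assume "\<not> u \<ge> 3"
    hence "u ^ 3 < 3 ^ 3" using upos by (intro power_strict_mono) auto
    thus False using u3 R27 by simp
  qed
  have Lu: "real L \<le> u" "u < real L + 1"
    unfolding L_def u_def[symmetric] using upos by (auto simp: of_nat_nat)
  have u9: "u * u \<ge> 9" using u_ge3 mult_mono[of 3 u 3 u] by auto
  have uu: "u \<le> u ^ 3"
  proof -
    have "u * 1 \<le> u * u^2" using u_ge3 u9 by (intro mult_left_mono) (auto simp: power2_eq_square)
    thus ?thesis by (simp add: power3_eq_cube power2_eq_square)
  qed
  show LR: "L \<le> R" using Lu uu u3 by linarith
  define a where "a = 1 / u^2"
  have a: "0 < a" "a \<le> 1/9" unfolding a_def using u9 upos by (auto simp: field_simps power2_eq_square)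
  define th where "th = pi / real (L+2)"
  have th_le: "th \<le> pi / u"
    unfolding th_def using Lu upos by (intro divide_left_mono) auto
  have th_pos: "th \<ge> 0" unfolding th_def by simp
  have "th^2 \<le> (pi / u)^2" using th_le th_pos by (intro power_mono) auto
  also have "(pi / u)^2 = pi^2 * a" unfolding a_def by (simp add: power_divide)
  also have "pi^2 * a \<le> 16 * a"
  proof -
    have "pi^2 \<le> 4^2" using pi_less_4 pi_gt_zero by (intro power_mono) auto
    thus ?thesis using a by (intro mult_right_mono) auto
  qed
  finally have "th^2 / 2 \<le> 8 * a" by simp
  hence cosb: "cos th \<ge> 1 - 8 * a" using cos_lb[of th] by linarith
  define phi where "phi = sqrt (real R * real (m - R))"
  have phi_nn: "phi \<ge> 0" unfolding phi_def by simp
  have mR: "real (m - R) \<ge> real R" using Rm by simp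
  have q: "0 \<le> 1 - a" "1 - a \<le> 1" using a by auto
  have BR: "real (R - L + 1) \<ge> real R * (1 - a)"
  proof -
    have "real R * (1 - a) = u^3 - u" unfolding a_def using u3 upos by (simp add: field_simps power2_eq_square power3_eq_cube)
    moreover have "real (R - L + 1) = real R - real L + 1" using LR by simp
    ultimately show ?thesis using Lu u3 by linarith
  qed
  have s1: "sqrt (real (m - R) * real (R - L + 1)) \<ge> phi * (1 - a)"
  proof -
    have "sqrt (real (m - R) * real (R - L + 1)) \<ge> sqrt (real (m - R) * (real R * (1 - a)))"
      using BR by (intro real_sqrt_le_mono mult_left_mono) auto
    also have "sqrt (real (m - R) * (real R * (1 - a))) = phi * sqrt (1 - a)"
      unfolding phi_def by (simp add: real_sqrt_mult mult_ac)
    also have "phi * sqrt (1 - a) \<ge> phi * (1 - a)"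
    proof (intro mult_left_mono phi_nn)
      have "(1 - a)^2 \<le> 1 - a" using q by (simp add: power2_eq_square mult_left_le)
      thus "1 - a \<le> sqrt (1 - a)" using q real_le_rsqrt by blast
    qed
    finally show ?thesis .
  qed
  have "2 * cos th * sqrt (real (m - R) * real (R - L + 1)) \<ge> 2 * (1 - 8 * a) * (phi * (1 - a))"
    using cosb s1 a phi_nn q by (intro mult_mono mult_left_mono) auto
  moreover have "2 * (1 - 8 * a) * (phi * (1 - a)) \<ge> 2 * phi - 18 * (phi * a)"
  proof -
    have "2 * (1 - 8 * a) * (phi * (1 - a)) = 2 * phi - 18 * (phi * a) + 16 * (phi * a * a)"
      by (simp add: algebra_simps)
    moreover have "phi * a * a \<ge> 0" using phi_nn a by simp
    ultimately show ?thesis by linarith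
  qed
  moreover have "phi * a \<le> real R powr (-1/6) * sqrt (real m)"
  proof -
    have "phi \<le> sqrt (real R * real m)" unfolding phi_def by (intro real_sqrt_le_mono mult_left_mono) auto
    hence "phi * a \<le> sqrt (real R * real m) * a" using a by (intro mult_right_mono) auto
    also have "sqrt (real R * real m) * a = (sqrt (real R) / u^2) * sqrt (real m)"
      unfolding a_def by (simp add: real_sqrt_mult)
    also have "sqrt (real R) / u^2 = real R powr (-1/6)"
    proof -
      have "sqrt (real R) = real R powr (1/2)" using Rpos by (simp add: powr_half_sqrt)
      moreover have "u^2 = real R powr (2/3)"
      proof -
        have "u^2 = u powr (real 2)" using upos by (simp add: powr_realpow)
        also have "\<dots> = real R powr ((1/3) * 2)" unfolding u_def by (simp add: powr_powr)
        finally show ?thesis by simp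
      qed
      moreover have "real R powr (1/2) / real R powr (2/3) = real R powr (1/2 - 2/3)"
        by (rule powr_diff[symmetric])
      moreover have "(1/2 - 2/3 :: real) = -1/6" by simp
      ultimately show ?thesis by simp
    qed
    finally show ?thesis .
  qed
  ultimately show "2 * sqrt (real R * real (m - R)) - 18 * real R powr (-1/6) * sqrt (real m)
         \<le> 2 * cos (pi / real (L+2)) * sqrt (real (m - R) * real (R - L + 1))"
    unfolding th_def[symmetric] phi_def[symmetric] by linarith
qed

lemma card_cube: "card (cube n) = 2 ^ n"
  unfolding cube_def by (simp add: card_Pow)

lemma finite_cube: "finite (cube n)" unfolding cube_def by simp

lemma card_ball:
  assumes "m \<le> n"
  shows "real (card {x\<in>cube n. lev m x \<le> R}) = (\<Sum>k\<le>m. if k \<le> R then real ((m choose k) * 2^(n-m)) else 0)"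
proof -
  have "real (card {x\<in>cube n. lev m x \<le> R}) = (\<Sum>x\<in>{x\<in>cube n. lev m x \<le> R}. (1::real))" by simp
  also have "\<dots> = (\<Sum>x\<in>cube n. if lev m x \<le> R then 1 else 0)"
    by (rule sum.inter_filter[OF finite_cube])
  also have "\<dots> = (\<Sum>k\<le>m. real ((m choose k) * 2^(n-m)) * (if k \<le> R then 1 else 0))"
    by (rule sum_level[OF assms])
  also have "\<dots> = (\<Sum>k\<le>m. if k \<le> R then real ((m choose k) * 2^(n-m)) else 0)"
    by (intro sum.cong) auto
  finally show ?thesis .
qed

lemma main_bound:
  fixes n m R s :: nat
  assumes mn: "m \<le> n" and R27: "27 \<le> R" and Rm: "2 * R \<le> m"
    and sz: "2 ^ (n - m) * exp (real m * Hl (real R / real m)) \<le> real s" and sn: "s \<le> 2 ^ n"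
  shows "real (n - m) + 2 * sqrt (real R * real (m - R)) - 18 * real R powr (-1/6) * sqrt (real m) \<le> Lambda n s"
proof -
  define L where "L = nat \<lfloor>real R powr (1/3)\<rfloor>"
  note we = win_est[OF R27 Rm, folded L_def]
  define B where "B = R - L"
  have BL: "B + L = R" unfolding B_def using we(1) by simp
  define ball where "ball = {x\<in>cube n. lev m x \<le> R}"
  have m0: "0 < m" using R27 Rm by simp
  have "real (card ball) = (\<Sum>k\<le>m. if k \<le> R then real ((m choose k) * 2^(n-m)) else 0)"
    unfolding ball_def by (rule card_ball[OF mn])
  also have "\<dots> = (\<Sum>k\<in>{k\<in>{..m}. k \<le> R}. real ((m choose k) * 2^(n-m)))"
    by (rule sum.inter_filter[symmetric]) simp
  also have "{k\<in>{..m}. k \<le> R} = {..R}" using Rm by auto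
  also have "(\<Sum>k\<le>R. real ((m choose k) * 2^(n-m))) = 2^(n-m) * (\<Sum>k\<le>R. real (m choose k))"
    by (simp add: sum_distrib_left mult_ac)
  also have "\<dots> \<le> 2^(n-m) * exp (real m * Hl (real R / real m))"
    using binom_ball[OF m0 Rm] by (intro mult_left_mono) auto
  also have "\<dots> \<le> real s" by (rule sz)
  finally have cb: "card ball \<le> s" by simp
  obtain A where A: "ball \<subseteq> A" "A \<subseteq> cube n" "card A = s"
    using exists_subset_between[OF cb _ _ finite_cube, of n] sn unfolding card_cube ball_def by auto
  have lb: "real (n - m) + 2 * cos (pi / real (L+2)) * sqrt (real (m - (B + L)) * real (B + 1)) \<le> Lambda n s"
    by (rule LB[OF mn]) (use BL Rm A in \<open>auto simp: ball_def\<close>)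
  have e1: "m - (B + L) = m - R" by (simp add: BL)
  have e2: "B + 1 = R - L + 1" by (simp add: B_def)
  have lb': "real (n - m) + 2 * cos (pi / real (L+2)) * sqrt (real (m - R) * real (R - L + 1)) \<le> Lambda n s"
    using lb unfolding e1 e2 .
  show ?thesis using lb' we(2) by linarith
qed

lemma part1_core:
  fixes n s :: nat and r :: real
  assumes s1: "1 \<le> s" and s2: "s \<le> 2 ^ (n - 1)"
    and r: "r = real n * bin_entropy_inv (log 2 (real s) / real n)" and r28: "28 \<le> r"
  shows "2 * sqrt (r * (real n - r)) - 40 * r powr (-1/6) * sqrt (real n) \<le> Lambda n s"
proof -
  have n0: "n > 0" using r r28 by (cases n) auto
  define y where "y = log 2 (real s) / real n"
  have ly0: "log 2 (real s) \<ge> 0" using s1 by simp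
  have "log 2 (real s) \<le> log 2 (real (2 ^ (n - 1)))" using s1 s2 by (subst log_le_cancel_iff) auto
  hence lyn: "log 2 (real s) \<le> real n" using n0 by simp
  have y: "0 \<le> y" "y \<le> 1" unfolding y_def using ly0 lyn n0 by (auto simp: divide_le_eq)
  define x where "x = bin_entropy_inv y"
  have x: "0 \<le> x" "x \<le> 1/2" "bin_entropy x = y" using entropy_inv[OF y] unfolding x_def by auto
  have rx: "r = real n * x" using r unfolding x_def y_def by simp
  have rn: "2 * r \<le> real n" using rx x n0 by simp
  define R where "R = nat \<lfloor>r\<rfloor>"
  have Rr: "real R \<le> r" "r < real R + 1" unfolding R_def using r28 by (auto simp: of_nat_nat)
  have R27: "27 \<le> R" using Rr r28 by linarith
  have Rn: "2 * R \<le> n" using Rr rn by linarith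
  have Rpos: "real R > 0" using R27 by simp
  have Rnx: "real R / real n \<le> x" using Rr(1) rx n0 by (simp add: divide_le_eq mult.commute)
  have Hle: "Hl (real R / real n) \<le> Hl x"
    using Rnx x by (intro Hl_mono) auto
  have Hx: "Hl x = y * ln 2" using bin_entropy_Hl[of x] x by simp
  have "2 ^ (n - n) * exp (real n * Hl (real R / real n)) \<le> exp (real n * Hl x)"
    using Hle n0 by simp
  also have "real n * Hl x = ln (real s)" unfolding Hx y_def using n0 by (simp add: log_def)
  also have "exp (ln (real s)) = real s" using s1 by simp
  finally have sz: "2 ^ (n - n) * exp (real n * Hl (real R / real n)) \<le> real s" .
  have "(2::nat) ^ (n - 1) \<le> 2 ^ n" by (intro power_increasing) auto
  hence sn: "s \<le> 2 ^ n" using s2 by linarith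
  have mb: "2 * sqrt (real R * real (n - R)) - 18 * real R powr (-1/6) * sqrt (real n) \<le> Lambda n s"
    using main_bound[OF order_refl R27 Rn sz sn] by simp
  define a where "a = sqrt (r * (real n - r))"
  define b where "b = sqrt (real R * real (n - R))"
  have rpos: "r > 0" using r28 by simp
  have a2: "a^2 = r * (real n - r)" unfolding a_def using rn rpos by simp
  have b2: "b^2 = real R * (real n - real R)" unfolding b_def using Rn by (simp add: of_nat_diff)
  have bnn: "b \<ge> 0" unfolding b_def by simp
  have a2b: "a^2 - b^2 \<le> real n"
  proof -
    have "a^2 - b^2 = (r - real R) * (real n - r - real R)" unfolding a2 b2 by (simp add: algebra_simps)
    also have "\<dots> \<le> 1 * real n" using Rr rn Rpos by (intro mult_mono) auto
    finally show ?thesis by simp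
  qed
  have a2b0: "b^2 \<le> a^2"
  proof -
    have "a^2 - b^2 = (r - real R) * (real n - r - real R)" unfolding a2 b2 by (simp add: algebra_simps)
    also have "\<dots> \<ge> 0" using Rr rn Rpos by (intro mult_nonneg_nonneg) auto
    finally show ?thesis by simp
  qed
  have ra: "a^2 \<ge> r * real n / 2"
  proof -
    have "r * (real n - r) - r * real n / 2 = r * (real n / 2 - r)" by (simp add: algebra_simps)
    moreover have "r * (real n / 2 - r) \<ge> 0" using rn rpos by (intro mult_nonneg_nonneg) auto
    ultimately show ?thesis unfolding a2 by linarith
  qed
  have "r * (real n - r) > 0" using rpos rn n0 by (intro mult_pos_pos) auto
  hence apos: "a > 0" by (simp add: a_def)
  have ba: "b \<le> a" using a2b0 by (rule power2_le_imp_le) (use apos in simp)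
  have "(a - b) * a \<le> a^2 - b^2"
  proof -
    have "a^2 - b^2 - (a - b) * a = b * (a - b)" by (simp add: power2_eq_square algebra_simps)
    moreover have "b * (a - b) \<ge> 0" using ba bnn by simp
    ultimately show ?thesis by linarith
  qed
  hence "(a - b) * a \<le> real n" using a2b by linarith
  hence ab: "a - b \<le> real n / a" using apos by (simp add: le_divide_eq)
  have t1: "2 * (real n / a) \<le> 3 * r powr (-1/6) * sqrt (real n)"
  proof -
    have lhs_nn: "2 * (real n / a) \<ge> 0" using apos by simp
    have "(2 * (real n / a))^2 = 4 * real n^2 / a^2" by (simp add: power_divide power_mult_distrib)
    also have "\<dots> \<le> 4 * real n^2 / (r * real n / 2)"
    proof (rule divide_left_mono)
      show "r * real n / 2 \<le> a^2" by (rule ra)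
      show "0 \<le> 4 * real n ^ 2" by simp
      show "0 < a^2 * (r * real n / 2)" using apos rpos n0 by simp
    qed
    also have "\<dots> = 8 * real n / r" using n0 rpos by (simp add: field_simps power2_eq_square)
    also have "\<dots> \<le> 9 * real n * r powr (-1/3)"
    proof -
      have "r powr (-1) \<le> r powr (-1/3)" using r28 by (intro powr_mono) auto
      hence h: "1 / r \<le> r powr (-1/3)" using rpos by (simp add: powr_minus_divide)
      have "8 * real n * (1 / r) \<le> 9 * real n * r powr (-1/3)"
        by (rule mult_mono) (use h rpos in auto)
      thus ?thesis by simp
    qed
    also have "9 * real n * r powr (-1/3) = (3 * r powr (-1/6) * sqrt (real n))^2"
    proof -
      have "(r powr (-1/6))^2 = r powr (-1/6) * r powr (-1/6)" by (simp only: power2_eq_square)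
      also have "\<dots> = r powr (-1/6 + -1/6)" by (simp only: powr_add[symmetric])
      also have "(-1/6 + -1/6 :: real) = -1/3" by simp
      finally have "(r powr (-1/6))^2 = r powr (-1/3)" .
      thus ?thesis by (simp add: power_mult_distrib)
    qed
    finally have "(2 * (real n / a))^2 \<le> (3 * r powr (-1/6) * sqrt (real n))^2" .
    thus ?thesis by (rule power2_le_imp_le) simp
  qed
  have t2: "real R powr (-1/6) \<le> 2 * r powr (-1/6)"
  proof -
    have "r / 2 \<le> real R" using Rr r28 by linarith
    hence "real R powr (-1/6) \<le> (r / 2) powr (-1/6)" using rpos by (intro powr_mono2') auto
    also have "\<dots> = r powr (-1/6) * 2 powr (1/6)"
    proof -
      have m6: "(-1/6 :: real) = - (1/6)" by simp
      have e1: "(r / 2) powr (- (1/6)) = r powr (- (1/6)) / 2 powr (- (1/6))" by (rule powr_divide)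
      have e2: "2 powr (- (1/6)) = inverse (2 powr (1/6) :: real)" by (rule powr_minus)
      have "(r / 2) powr (- (1/6)) = r powr (- (1/6)) * 2 powr (1/6)" unfolding e1 e2 by (simp only: divide_inverse inverse_inverse_eq)
      thus ?thesis unfolding m6 .
    qed
    also have "\<dots> \<le> r powr (-1/6) * 2"
    proof -
      have "2 powr (1/6) \<le> (2::real) powr 1" by (intro powr_mono) auto
      thus ?thesis by (intro mult_left_mono) auto
    qed
    finally show ?thesis by simp
  qed
  have sq: "sqrt (real n) \<ge> 0" by simp
  have "18 * real R powr (-1/6) * sqrt (real n) \<le> 36 * r powr (-1/6) * sqrt (real n)"
    using t2 sq by (intro mult_right_mono) auto
  moreover have "r powr (-1/6) * sqrt (real n) \<ge> 0" by simp
  ultimately show ?thesis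
    using mb ab t1 unfolding a_def[symmetric] b_def[symmetric] by linarith
qed

lemma part1:
  "\<exists>C r0 :: real. C > 0 \<and> r0 > 0 \<and>
           (\<forall>n s :: nat. \<forall>r :: real.
              1 \<le> s \<longrightarrow> s \<le> 2 ^ (n - 1) \<longrightarrow>
              r = real n * bin_entropy_inv (log 2 (real s) / real n) \<longrightarrow>
              r \<ge> r0 \<longrightarrow>
              Lambda n s \<ge> 2 * sqrt (r * (real n - r)) - C * r powr (-1/6) * sqrt (real n))"
  apply (rule exI[of _ 40], rule exI[of _ 28])
  using part1_core by auto

lemma sqrt_1mx: fixes x :: real assumes "0 \<le> x" "x \<le> 1" shows "1 - x/2 - x^2/2 \<le> sqrt (1 - x)"
proof -
  define y where "y = (1 - x) * (1 + x/2)"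
  have y0: "y \<ge> 0" unfolding y_def using assms by simp
  have "y^2 = (1 - x) * ((1 - x) * (1 + x/2)^2)" unfolding y_def by (simp add: power2_eq_square mult_ac)
  also have "(1 - x) * (1 + x/2)^2 = 1 - 3/4 * x^2 - x^3/4" by (simp add: power2_eq_square power3_eq_cube field_simps)
  also have "\<dots> \<le> 1"
  proof -
    have "x^2 \<ge> 0" "x^3 \<ge> 0" using assms by auto
    thus ?thesis by linarith
  qed
  finally have "y^2 \<le> (1 - x) * 1" using assms by (simp add: mult_left_mono)
  hence "y \<le> sqrt (1 - x)" using real_le_rsqrt by simp
  moreover have "y = 1 - x/2 - x^2/2" unfolding y_def by (simp add: power2_eq_square field_simps)
  ultimately show ?thesis by simp
qed

lemma powr_quarter: fixes m :: real assumes "m > 0" shows "(m / 4) powr (-1/6) \<le> 2 * m powr (-1/6)"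
proof -
  have m6: "(-1/6 :: real) = - (1/6)" by simp
  have e1: "(m / 4) powr (- (1/6)) = m powr (- (1/6)) / 4 powr (- (1/6))" by (rule powr_divide)
  have e2: "4 powr (- (1/6)) = inverse (4 powr (1/6) :: real)" by (rule powr_minus)
  have e: "(m / 4) powr (- (1/6)) = m powr (- (1/6)) * 4 powr (1/6)" unfolding e1 e2 by (simp only: divide_inverse inverse_inverse_eq)
  have "4 powr (1/6) \<le> (4::real) powr (1/2)" by (intro powr_mono) auto
  also have "(4::real) powr (1/2) = 2" by (simp add: powr_half_sqrt)
  finally have "m powr (- (1/6)) * 4 powr (1/6) \<le> m powr (- (1/6)) * 2" by (intro mult_left_mono) auto
  thus ?thesis unfolding m6 e by simp
qed

lemma part2_core:
  fixes n s :: nat and e Lg :: real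
  assumes e: "0 < e" "e \<le> 1" and s1: "1 \<le> s" and sn: "s \<le> 2^n"
   and Lg: "Lg = ln (2^n / real s)"
   and K1: "Lg \<ge> 3 / e" and K2: "Lg \<ge> 2" and K3: "Lg^2 * e^4 \<ge> 192 * 108^3"
   and nb: "real n \<ge> 96 / e * Lg + 1"
  shows "Delta n s \<le> Lg * (1 + e)"
proof -
  define c where "c = 96 / e"
  have c96: "c \<ge> 96" unfolding c_def using e by (simp add: field_simps)
  define m where "m = nat \<lceil>c * Lg\<rceil>"
  have cL: "c * Lg \<ge> 192" using c96 K2 mult_mono[of 96 c 2 Lg] by simp
  have m1: "real m \<ge> c * Lg" "real m < c * Lg + 1"
    unfolding m_def using cL ceiling_correct[of "c * Lg"] by (auto simp: of_nat_nat)
  have mn: "m \<le> n" using m1 nb unfolding c_def by linarith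
  have m192: "real m \<ge> 192" using m1 cL by linarith
  have m2: "real m \<le> 2 * c * Lg" using m1 cL by linarith
  have mpos: "real m > 0" using m192 by simp
  have Lgm: "96 * Lg \<le> real m" using m1 c96 K2 mult_right_mono[of 96 c Lg] by linarith
  define t where "t = sqrt (Lg * real m / 2)"
  have Lm0: "Lg * real m \<ge> 0" using K2 mpos by simp
  hence t2: "t^2 = Lg * real m / 2" unfolding t_def by simp
  have t0: "t \<ge> 0" unfolding t_def using Lm0 by simp
  have t1: "t \<ge> 1"
  proof -
    have "Lg * real m / 2 \<ge> 1" using K2 m192 mult_mono[of 2 Lg 192 "real m"] by simp
    thus ?thesis unfolding t_def by simp
  qed
  have t8: "t \<le> real m / 8"
  proof -
    have "t^2 \<le> (real m / 8)^2"
    proof -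
      have "Lg * real m / 2 \<le> (real m / 32) * real m / 2" using Lgm mpos by (intro divide_right_mono mult_right_mono) auto
      thus ?thesis unfolding t2 by (simp add: power2_eq_square)
    qed
    thus ?thesis by (rule power2_le_imp_le) (use mpos in auto)
  qed
  define R where "R = nat \<lfloor>real m / 2 - t\<rfloor>"
  have R1: "real R \<le> real m / 2 - t" "real m / 2 - t < real R + 1"
    unfolding R_def using t8 mpos by (auto simp: of_nat_nat)
  define t' where "t' = real m / 2 - real R"
  have tt: "t \<le> t'" "t' < t + 1" unfolding t'_def using R1 by auto
  have R27: "27 \<le> R" using R1 t8 m192 by linarith
  have Rm: "2 * R \<le> m" using R1 t0 by linarith
  have R4: "real R \<ge> real m / 4" using R1 t8 m192 by linarith
  have t'pos: "t' > 0" using tt t1 by linarith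
  have t'm: "t' < real m / 2" unfolding t'_def using R27 by simp
  have sz: "2 ^ (n - m) * exp (real m * Hl (real R / real m)) \<le> real s"
  proof -
    define d where "d = t' / real m"
    have d: "0 \<le> d" "d < 1/2" unfolding d_def using t'pos t'm mpos by (auto simp: field_simps)
    have Rd: "real R / real m = 1/2 - d" unfolding d_def t'_def using mpos by (simp add: field_simps)
    have "2 * d^2 \<le> ln 2 - Hl (1/2 - d)" by (rule pinsker[OF d])
    hence "real m * Hl (real R / real m) \<le> real m * (ln 2 - 2 * d^2)"
      unfolding Rd using mpos by (intro mult_left_mono) auto
    also have "real m * (ln 2 - 2 * d^2) = real m * ln 2 - 2 * t'^2 / real m"
      unfolding d_def using mpos by (simp add: field_simps power2_eq_square)
    also have "\<dots> \<le> real m * ln 2 - 2 * t^2 / real m"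
    proof -
      have "t^2 \<le> t'^2" using tt t0 by (intro power_mono) auto
      thus ?thesis using mpos by (simp add: divide_right_mono)
    qed
    also have "2 * t^2 / real m = Lg" unfolding t2 using mpos by simp
    finally have ex: "exp (real m * Hl (real R / real m)) \<le> exp (real m * ln 2 - Lg)" by simp
    have sp: "real s > 0" using s1 by simp
    have "exp (real m * ln 2 - Lg) = 2 ^ m / (2 ^ n / real s)"
    proof -
      have "exp (real m * ln 2) = 2 ^ m" by (simp add: exp_of_nat_mult)
      moreover have "exp Lg = 2 ^ n / real s" unfolding Lg using sp by simp
      ultimately show ?thesis by (simp add: exp_diff)
    qed
    hence "2 ^ (n - m) * exp (real m * Hl (real R / real m)) \<le> 2 ^ (n - m) * (2 ^ m / (2 ^ n / real s))"
      using ex by (intro mult_left_mono) auto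
    also have "\<dots> = real s"
    proof -
      have "(2::real) ^ (n - m) * 2 ^ m = 2 ^ n" using mn by (simp add: power_add[symmetric])
      thus ?thesis using sp by (simp add: field_simps)
    qed
    finally show ?thesis .
  qed
  have mb: "real (n - m) + 2 * sqrt (real R * real (m - R)) - 18 * real R powr (-1/6) * sqrt (real m) \<le> Lambda n s"
    by (rule main_bound[OF mn R27 Rm sz sn])
  have sq: "2 * sqrt (real R * real (m - R)) \<ge> real m - 2 * t'^2 / real m - 8 * t'^4 / real m^3"
  proof -
    define x where "x = 4 * t'^2 / real m^2"
    have x0: "0 \<le> x" unfolding x_def by simp
    have x1: "x \<le> 1"
    proof -
      have "t'^2 \<le> (real m / 2)^2" using t'pos t'm by (intro power_mono) auto
      thus ?thesis unfolding x_def using mpos by (simp add: field_simps power2_eq_square)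
    qed
    have "real R * real (m - R) = (real m / 2)^2 * (1 - x)"
      unfolding x_def using Rm mpos by (simp add: t'_def of_nat_diff field_simps power2_eq_square)
    hence "sqrt (real R * real (m - R)) = real m / 2 * sqrt (1 - x)"
      using mpos by (simp add: real_sqrt_mult)
    moreover have "sqrt (1 - x) \<ge> 1 - x/2 - x^2/2" by (rule sqrt_1mx[OF x0 x1])
    ultimately have "2 * sqrt (real R * real (m - R)) \<ge> real m * (1 - x/2 - x^2/2)"
    proof -
      assume h1: "sqrt (real R * real (m - R)) = real m / 2 * sqrt (1 - x)"
        and h2: "1 - x/2 - x^2/2 \<le> sqrt (1 - x)"
      have "real m * (1 - x/2 - x^2/2) \<le> real m * sqrt (1 - x)"
        by (rule mult_left_mono) (use h2 mpos in auto)
      thus ?thesis unfolding h1 by simp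
    qed
    also have "real m * (1 - x/2 - x^2/2) = real m - 2 * t'^2 / real m - 8 * t'^4 / real m^3"
      unfolding x_def using mpos by (simp add: field_simps power2_eq_square power4_eq_xxxx power3_eq_cube)
    finally show ?thesis .
  qed
  have B1: "2 * t'^2 / real m \<le> Lg + 1"
  proof -
    have "t'^2 \<le> (t + 1)^2" using tt t'pos by (intro power_mono) auto
    hence "2 * t'^2 / real m \<le> 2 * (t + 1)^2 / real m" using mpos by (simp add: divide_right_mono)
    also have "2 * (t + 1)^2 / real m = 2 * t^2 / real m + (4 * t + 2) / real m"
      using mpos by (simp add: field_simps power2_eq_square)
    also have "2 * t^2 / real m = Lg" unfolding t2 using mpos by simp
    also have "(4 * t + 2) / real m \<le> 1" using t8 m192 mpos by (simp add: divide_le_eq)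
    finally show ?thesis by simp
  qed
  have B2: "8 * t'^4 / real m^3 \<le> e * Lg / 3"
  proof -
    have "t' \<le> 2 * t" using tt t1 by linarith
    hence "t'^4 \<le> (2 * t)^4" using t'pos by (intro power_mono) auto
    also have "(2 * t)^4 = 16 * (t^2)^2" by (simp add: power_mult_distrib power_mult[symmetric])
    also have "\<dots> = 4 * Lg^2 * real m^2" unfolding t2 by (simp add: power2_eq_square field_simps)
    finally have "8 * t'^4 / real m^3 \<le> 8 * (4 * Lg^2 * real m^2) / real m^3"
      using mpos by (simp add: divide_right_mono)
    also have "\<dots> = 32 * Lg^2 / real m" using mpos by (simp add: field_simps power2_eq_square power3_eq_cube)
    also have "\<dots> \<le> 32 * Lg^2 / (c * Lg)"
      using m1 cL K2 by (intro divide_left_mono) auto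
    also have "\<dots> = e * Lg / 3" unfolding c_def using e K2 by (simp add: field_simps power2_eq_square)
    finally show ?thesis .
  qed
  have B3: "18 * real R powr (-1/6) * sqrt (real m) \<le> e * Lg / 3"
  proof -
    have "real R powr (-1/6) \<le> (real m / 4) powr (-1/6)" using R4 mpos by (intro powr_mono2') auto
    also have "\<dots> \<le> 2 * real m powr (-1/6)" by (rule powr_quarter[OF mpos])
    finally have "18 * real R powr (-1/6) * sqrt (real m) \<le> 18 * (2 * real m powr (-1/6)) * sqrt (real m)"
      by (intro mult_right_mono) auto
    also have "real m powr (-1/6) * sqrt (real m) = real m powr (1/3)"
    proof -
      have "sqrt (real m) = real m powr (1/2)" using mpos by (simp add: powr_half_sqrt)
      hence "real m powr (-1/6) * sqrt (real m) = real m powr (-1/6) * real m powr (1/2)" by simp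
      also have "\<dots> = real m powr (-1/6 + 1/2)" by (simp only: powr_add[symmetric])
      also have "(-1/6 + 1/2 :: real) = 1/3" by simp
      finally show ?thesis .
    qed
    hence "18 * (2 * real m powr (-1/6)) * sqrt (real m) = 36 * real m powr (1/3)" by simp
    also have "real m powr (1/3) \<le> e * Lg / 108"
    proof -
      define X where "X = real m powr (1/3)"
      have X3: "X ^ 3 = real m"
      proof -
        have "X ^ 3 = X powr (real 3)" unfolding X_def using mpos by (simp add: powr_realpow)
        also have "\<dots> = real m powr ((1/3) * 3)" unfolding X_def by (simp add: powr_powr)
        finally show ?thesis using mpos by simp
      qed
      have "(e * Lg / 108) ^ 3 = (e^4 * Lg^2) * Lg / (e * 108^3)"
        using e by (simp add: power_divide power_mult_distrib power2_eq_square power3_eq_cube power4_eq_xxxx)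
      also have "\<dots> \<ge> (192 * 108^3) * Lg / (e * 108^3)"
        using K3 K2 e by (intro divide_right_mono mult_right_mono) (auto simp: mult.commute)
      also have "(192 * 108^3) * Lg / (e * 108^3) = 2 * c * Lg" unfolding c_def by simp
      finally have "X ^ 3 \<le> (e * Lg / 108) ^ 3" using X3 m2 by linarith
      hence X3le: "X ^ 3 \<le> (e * Lg / 108) ^ 3" .
      show ?thesis unfolding X_def[symmetric]
      proof (rule ccontr)
        assume "\<not> X \<le> e * Lg / 108"
        hence "e * Lg / 108 < X" by simp
        hence "(e * Lg / 108) ^ 3 < X ^ 3" using e K2 by (intro power_strict_mono) auto
        with X3le show False by simp
      qed
    qed
    finally show ?thesis by (simp add: mult.commute)
  qed
  have B4: "1 \<le> e * Lg / 3" using K1 e by (simp add: field_simps)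
  have "Delta n s = real n - Lambda n s" unfolding Delta_def by simp
  also have "\<dots> \<le> real n - (real (n - m) + (real m - 2 * t'^2 / real m - 8 * t'^4 / real m^3) - 18 * real R powr (-1/6) * sqrt (real m))"
    using mb sq by linarith
  also have "\<dots> = 2 * t'^2 / real m + 8 * t'^4 / real m^3 + 18 * real R powr (-1/6) * sqrt (real m)"
    using mn by (simp add: of_nat_diff)
  also have "\<dots> \<le> Lg * (1 + e)" using B1 B2 B3 B4 by (simp add: algebra_simps)
  finally show ?thesis .
qed

lemma part2:
  "\<forall>s :: nat \<Rightarrow> nat.
            (\<forall>n. 1 \<le> s n \<and> s n \<le> 2 ^ (n - 1)) \<longrightarrow>
            ((\<lambda>n. (real n - log 2 (real (s n))) / real n) \<longlonglongrightarrow> 0) \<longrightarrow>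
            ((\<lambda>n. real (s n) / 2 ^ n) \<longlonglongrightarrow> 0) \<longrightarrow>
            (\<forall>\<epsilon> > 0. eventually (\<lambda>n. Delta n (s n) \<le> ln (2 ^ n / real (s n)) * (1 + \<epsilon>)) sequentially)"
proof (intro allI impI)
  fix s :: "nat \<Rightarrow> nat" and \<epsilon> :: real
  assume hs: "\<forall>n. 1 \<le> s n \<and> s n \<le> 2 ^ (n - 1)"
    and h1: "(\<lambda>n. (real n - log 2 (real (s n))) / real n) \<longlonglongrightarrow> 0"
    and h2: "(\<lambda>n. real (s n) / 2 ^ n) \<longlonglongrightarrow> 0"
    and ep: "\<epsilon> > 0"
  define e where "e = min \<epsilon> 1"
  have e: "0 < e" "e \<le> 1" "e \<le> \<epsilon>" unfolding e_def using ep by auto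
  define K where "K = max (max (3 / e) 2) (sqrt (192 * 108^3 / e^4))"
  define c where "c = 96 / e"
  have cpos: "c > 0" unfolding c_def using e by simp
  have spos: "real (s n) > 0" for n using hs[rule_format, of n] by simp
  have sle: "s n \<le> 2 ^ n" for n
  proof -
    have "(2::nat) ^ (n - 1) \<le> 2 ^ n" by (intro power_increasing) auto
    thus ?thesis using hs[rule_format, of n] by linarith
  qed
  have ev1: "eventually (\<lambda>n. ln (2 ^ n / real (s n)) \<ge> K) sequentially"
  proof -
    have "eventually (\<lambda>n. real (s n) / 2 ^ n < exp (- K)) sequentially"
      by (rule order_tendstoD(2)[OF h2]) simp
    thus ?thesis
    proof (rule eventually_mono)
      fix n assume a: "real (s n) / 2 ^ n < exp (- K)"
      have p: "real (s n) / 2 ^ n > 0" using spos[of n] by simp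
      have "ln (real (s n) / 2 ^ n) < ln (exp (- K))" using a p by (subst ln_less_cancel_iff) auto
      hence "ln (real (s n) / 2 ^ n) < - K" by simp
      moreover have "ln (2 ^ n / real (s n)) = - ln (real (s n) / 2 ^ n)"
        using spos[of n] by (simp add: ln_div)
      ultimately show "ln (2 ^ n / real (s n)) \<ge> K" by simp
    qed
  qed
  have ev2: "eventually (\<lambda>n. (real n - log 2 (real (s n))) / real n < 1 / (2 * c * ln 2)) sequentially"
    by (rule order_tendstoD(2)[OF h1]) (use cpos in simp)
  have ev3: "eventually (\<lambda>n. n \<ge> 2) sequentially" by (rule eventually_ge_at_top)
  show "eventually (\<lambda>n. Delta n (s n) \<le> ln (2 ^ n / real (s n)) * (1 + \<epsilon>)) sequentially"
    using ev1 ev2 ev3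
  proof (eventually_elim)
    case (elim n)
    define Lg where "Lg = ln (2 ^ n / real (s n))"
    have LgK: "Lg \<ge> K" using elim(1) unfolding Lg_def .
    have K1: "Lg \<ge> 3 / e" and K2: "Lg \<ge> 2" using LgK unfolding K_def by auto
    have K3: "Lg^2 * e^4 \<ge> 192 * 108^3"
    proof -
      have "Lg \<ge> sqrt (192 * 108^3 / e^4)" using LgK unfolding K_def by auto
      hence "Lg^2 \<ge> 192 * 108^3 / e^4" using K2 by (metis real_sqrt_le_iff real_sqrt_pow2_iff sqrt_le_D)
      thus ?thesis using e by (simp add: field_simps)
    qed
    have n2: "n \<ge> 2" using elim(3) .
    have npos: "real n > 0" using n2 by simp
    have Lgeq: "Lg = ln 2 * (real n - log 2 (real (s n)))"
    proof -
      have "Lg = ln (2 ^ n) - ln (real (s n))" unfolding Lg_def using spos[of n] by (simp add: ln_div)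
      also have "ln ((2::real) ^ n) = real n * ln 2" by (simp add: ln_realpow)
      finally show ?thesis by (simp add: log_def algebra_simps)
    qed
    have "c * Lg = c * ln 2 * real n * ((real n - log 2 (real (s n))) / real n)"
      unfolding Lgeq using npos by (simp add: field_simps)
    also have "\<dots> \<le> c * ln 2 * real n * (1 / (2 * c * ln 2))"
      using elim(2) cpos npos by (intro mult_left_mono) auto
    also have "\<dots> = real n / 2" using cpos by simp
    finally have "c * Lg \<le> real n / 2" .
    hence nb: "real n \<ge> 96 / e * Lg + 1" unfolding c_def using n2 by simp
    have "Delta n (s n) \<le> Lg * (1 + e)"
      by (rule part2_core[OF e(1,2) _ sle Lg_def K1 K2 K3 nb]) (use hs in auto)
    also have "\<dots> \<le> Lg * (1 + \<epsilon>)" using e K2 by (intro mult_left_mono) auto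
    finally show ?case unfolding Lg_def .
  qed
qed

theorem corollary1p15:
  shows "(\<exists>C r0 :: real. C > 0 \<and> r0 > 0 \<and>
           (\<forall>n s :: nat. \<forall>r :: real.
              1 \<le> s \<longrightarrow> s \<le> 2 ^ (n - 1) \<longrightarrow>
              r = real n * bin_entropy_inv (log 2 (real s) / real n) \<longrightarrow>
              r \<ge> r0 \<longrightarrow>
              Lambda n s \<ge> 2 * sqrt (r * (real n - r)) - C * r powr (-1/6) * sqrt (real n)))
       \<and>
         (\<forall>s :: nat \<Rightarrow> nat.
            (\<forall>n. 1 \<le> s n \<and> s n \<le> 2 ^ (n - 1)) \<longrightarrow>
            ((\<lambda>n. (real n - log 2 (real (s n))) / real n) \<longlonglongrightarrow> 0) \<longrightarrow>
            ((\<lambda>n. real (s n) / 2 ^ n) \<longlonglongrightarrow> 0) \<longrightarrow>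
            (\<forall>\<epsilon> > 0. eventually (\<lambda>n. Delta n (s n) \<le> ln (2 ^ n / real (s n)) * (1 + \<epsilon>)) sequentially))"
  using part1 part2 by blast

end
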